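(* Let $n\in\mathbb{N}$, let $f_1,\ldots,f_n$ be Alpert multiwavelets of multiplicity $n$, and let $1\le k\le n$. For $j\ge1$ let $a_j$ be the real number with $P_{j,j-1}(x)-P_{j-1,j}(x)=a_jP_{j-1,j-1}(x)$. Then there are real numbers $c_j$ and $d_j$ such that, almost everywhere on $[-1,1]$, \[ f_k=\begin{cases}\displaystyle\sum_{j=(k+n)/2}^{n} c_j\,Q_{j,j}, & k+n \text{ even},\\[2mm] \displaystyle\frac12\sum_{j=(k+n+1)/2}^{n} a_j d_{j-1}\,Q_{j,j}+\sum_{j=(k+n-1)/2}^{n-1} d_j\,Q_{j+1,j}, & k+n\text{ odd}.\end{cases} \]
   Context: Alpert multiwavelets of multiplicity $n\in\mathbb{N}$: real functions $f_1,\ldots,f_n$ supported on $[-1,1]$ such that (i) the restriction of each $f_i$ to $(0,1)$ is a polynomial of degree at most $n-1$; (ii) $f_k(-t)=(-1)^{k+n-1}f_k(t)$ for $t\in(0,1)$; (iii) $\int_{-1}^1 f_i(t)f_j(t)\,dt=\delta_{i,j}$ for $1\le i,j\le n$; (iv) $\int_{-1}^1 f_k(t)t^i\,dt=0$ for $i=0,1,\ldots,k+n-2$. Type I Legendre–Angelesco polynomials: for integers $n,m\ge 0$ with $n+m\ge1$, $(A_{n,m},B_{n,m})$ is the unique pair of polynomials with $\deg A_{n,m}\le n-1$, $\deg B_{n,m}\le m-1$ (degree $\le -1$ meaning the zero polynomial) such that, writing $Q_{n,m}=A_{n,m}\chi_{[-1,0]}+B_{n,m}\chi_{[0,1]}$,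 one has $\int_{-1}^1 Q_{n,m}(x)x^k\,dx=0$ for $0\le k\le n+m-2$ and $\int_{-1}^1 Q_{n,m}(x)x^{n+m-1}\,dx=1$. Type II Legendre–Angelesco polynomials: for $n,m\ge0$, $P_{n,m}$ is the unique monic polynomial of degree $n+m$ with $\int_{-1}^0 P_{n,m}(x)x^k\,dx=0$ for $0\le k\le n-1$ and $\int_0^1 P_{n,m}(x)x^k\,dx=0$ for $0\le k\le m-1$. (The difference $P_{j,j-1}-P_{j-1,j}$ is a constant multiple of $P_{j-1,j-1}$, which defines $a_j$.) *)

theory Defs
  imports "HOL-Analysis.Analysis" "HOL-Computational_Algebra.Polynomial"
begin

definition alpert_multiwavelets :: "nat \<Rightarrow> (nat \<Rightarrow> real \<Rightarrow> real) \<Rightarrow> bool" where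
  "alpert_multiwavelets n f \<longleftrightarrow>
     (\<forall>i\<in>{1..n}. \<forall>t. t \<notin> {-1..1} \<longrightarrow> f i t = 0) \<and>
     (\<forall>i\<in>{1..n}. \<exists>p :: real poly. degree p \<le> n - 1 \<and> (\<forall>t\<in>{0<..<1}. f i t = poly p t)) \<and>
     (\<forall>k\<in>{1..n}. \<forall>t\<in>{0<..<1}. f k (-t) = (-1) ^ (k + n - 1) * f k t) \<and>
     (\<forall>i\<in>{1..n}. \<forall>j\<in>{1..n}. (LBINT t=-1..1. f i t * f j t) = (if i = j then 1 else 0)) \<and>
     (\<forall>k\<in>{1..n}. \<forall>i::nat. i \<le> k + n - 2 \<longrightarrow> (LBINT t=-1..1. f k t * t ^ i) = 0)"

text \<open>Type I Legendre--Angelesco pair (A_{n,m}, B_{n,m}); degree \<le> -1 means zero polynomial.\<close>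
definition typeI_cond :: "nat \<Rightarrow> nat \<Rightarrow> real poly \<Rightarrow> real poly \<Rightarrow> bool" where
  "typeI_cond n m A B \<longleftrightarrow>
     (if n = 0 then A = 0 else degree A \<le> n - 1) \<and>
     (if m = 0 then B = 0 else degree B \<le> m - 1) \<and>
     (\<forall>k::nat. k + 2 \<le> n + m \<longrightarrow>
        (LBINT x=-1..1. (poly A x * indicator {-1..0} x + poly B x * indicator {0..1} x) * x ^ k) = 0) \<and>
     (LBINT x=-1..1. (poly A x * indicator {-1..0} x + poly B x * indicator {0..1} x) * x ^ (n + m - 1)) = 1"

definition typeI_pair :: "nat \<Rightarrow> nat \<Rightarrow> real poly \<times> real poly" where
  "typeI_pair n m = (THE AB. typeI_cond n m (fst AB) (snd AB))"

definition LA_Q :: "nat \<Rightarrow> nat \<Rightarrow> real \<Rightarrow> real" where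
  "LA_Q n m x = poly (fst (typeI_pair n m)) x * indicator {-1..0} x
              + poly (snd (typeI_pair n m)) x * indicator {0..1} x"

definition LA_P :: "nat \<Rightarrow> nat \<Rightarrow> real poly" where
  "LA_P n m = (THE P. degree P = n + m \<and> lead_coeff P = 1 \<and>
      (\<forall>k<n. (LBINT x=-1..0. poly P x * x ^ k) = 0) \<and>
      (\<forall>k<m. (LBINT x=0..1. poly P x * x ^ k) = 0))"

definition LA_a :: "nat \<Rightarrow> real" where
  "LA_a j = (THE a. LA_P j (j - 1) - LA_P (j - 1) j = smult a (LA_P (j - 1) (j - 1)))"

end

theory Submission
  imports Defs "Jordan_Normal_Form.Determinant"
begin



lemma sq_solve:
  fixes A :: "real mat"
  assumes A: "A \<in> carrier_mat N N" and d: "Determinant.det A \<noteq> 0" and b: "b \<in> carrier_vec N"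
  shows "\<exists>v\<in>carrier_vec N. A *\<^sub>v v = b"
proof -
  have "A \<in> Units (ring_mat TYPE(real) N undefined)" using det_non_zero_imp_unit[OF A d] .
  then obtain B where B: "B \<in> carrier_mat N N" and AB: "A * B = 1\<^sub>m N"
    unfolding Units_def by (auto simp: ring_mat_def)
  have "A *\<^sub>v (B *\<^sub>v b) = (A * B) *\<^sub>v b" using A B b by (simp add: assoc_mult_mat_vec)
  also have "\<dots> = b" using AB b by simp
  finally show ?thesis using B b by (intro bexI[of _ "B *\<^sub>v b"]) auto
qed

lemma LA_main:
  fixes G :: "nat \<Rightarrow> nat \<Rightarrow> real"
  assumes inj: "\<And>x. (\<forall>k<N. (\<Sum>i<N. x i * G i k) = 0) \<Longrightarrow> (\<forall>i<N. x i = 0)"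
  shows "\<And>b. \<exists>x. \<forall>k<N. (\<Sum>i<N. x i * G i k) = b k"
    and "\<And>y. (\<forall>i<N. (\<Sum>k<N. G i k * y k) = 0) \<Longrightarrow> (\<forall>k<N. y k = 0)"
    and "\<And>b. \<exists>y. \<forall>i<N. (\<Sum>k<N. G i k * y k) = b i"
proof -
  define M where "M = Matrix.mat N N (\<lambda>(i,k). G i k)"
  have M: "M \<in> carrier_mat N N" "transpose_mat M \<in> carrier_mat N N" unfolding M_def by auto
  have Mv: "vec_index (M *\<^sub>v v) i = (\<Sum>k<N. G i k * vec_index v k)" if "i < N" "v \<in> carrier_vec N" for v i
    using that unfolding M_def by (auto simp: mult_mat_vec_def scalar_prod_def lessThan_atLeast0 intro!: sum.cong)
  have MTv: "vec_index (transpose_mat M *\<^sub>v v) k = (\<Sum>i<N. vec_index v i * G i k)" if "k < N" "v \<in> carrier_vec N" for v k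
    using that unfolding M_def by (auto simp: mult_mat_vec_def scalar_prod_def lessThan_atLeast0 mult.commute intro!: sum.cong)
  have dT: "Determinant.det (transpose_mat M) \<noteq> 0"
  proof
    assume "Determinant.det (transpose_mat M) = 0"
    then obtain v where v: "v \<in> carrier_vec N" "v \<noteq> 0\<^sub>v N" "transpose_mat M *\<^sub>v v = 0\<^sub>v N"
      using det_0_iff_vec_prod_zero[OF M(2)] by auto
    have "\<forall>k<N. (\<Sum>i<N. vec_index v i * G i k) = 0"
    proof (intro allI impI)
      fix k assume k: "k < N"
      have "vec_index (transpose_mat M *\<^sub>v v) k = 0" using v(3) k by simp
      thus "(\<Sum>i<N. vec_index v i * G i k) = 0" using MTv[OF k v(1)] by simp
    qed
    hence "\<forall>i<N. vec_index v i = 0" by (rule inj)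
    hence "v = 0\<^sub>v N" using v(1) by (intro eq_vecI) auto
    thus False using v(2) by simp
  qed
  have dM: "Determinant.det M \<noteq> 0" using dT Determinant.det_transpose[OF M(1)] by simp
  show "\<exists>x. \<forall>k<N. (\<Sum>i<N. x i * G i k) = b k" for b
  proof -
    obtain v where v: "v \<in> carrier_vec N" "transpose_mat M *\<^sub>v v = Matrix.vec N b"
      using sq_solve[OF M(2) dT, of "Matrix.vec N b"] by auto
    show ?thesis
    proof (intro exI[of _ "\<lambda>i. vec_index v i"] allI impI)
      fix k assume k: "k < N"
      have "vec_index (transpose_mat M *\<^sub>v v) k = b k" using v(2) k by simp
      thus "(\<Sum>i<N. vec_index v i * G i k) = b k" using MTv[OF k v(1)] by simp
    qed
  qed
  show "\<exists>y. \<forall>i<N. (\<Sum>k<N. G i k * y k) = b i" for b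
  proof -
    obtain v where v: "v \<in> carrier_vec N" "M *\<^sub>v v = Matrix.vec N b"
      using sq_solve[OF M(1) dM, of "Matrix.vec N b"] by auto
    show ?thesis
    proof (intro exI[of _ "\<lambda>i. vec_index v i"] allI impI)
      fix i assume i: "i < N"
      have "vec_index (M *\<^sub>v v) i = b i" using v(2) i by simp
      thus "(\<Sum>k<N. G i k * vec_index v k) = b i" using Mv[OF i v(1)] by simp
    qed
  qed
  show "\<forall>k<N. y k = 0" if h: "\<forall>i<N. (\<Sum>k<N. G i k * y k) = 0" for y
  proof -
    have "M *\<^sub>v Matrix.vec N y = 0\<^sub>v N"
      by (rule eq_vecI) (use h Mv[of _ "Matrix.vec N y"] M in auto)
    hence "Matrix.vec N y = 0\<^sub>v N"
      using det_0_iff_vec_prod_zero[OF M(1)] dM vec_carrier[of N y] by blast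
    thus ?thesis by (metis index_vec index_zero_vec(1))
  qed
qed


definition Jab :: "real \<Rightarrow> real \<Rightarrow> real poly \<Rightarrow> real" where
  "Jab a b P = (\<Sum>i\<le>degree P. coeff P i * (b ^ Suc i - a ^ Suc i) / Suc i)"

lemma Jab_bound:
  assumes "degree P < N"
  shows "Jab a b P = (\<Sum>i<N. coeff P i * (b ^ Suc i - a ^ Suc i) / Suc i)"
  unfolding Jab_def
  by (rule sum.mono_neutral_left) (use assms in \<open>auto simp: coeff_eq_0\<close>)

lemma Jab_LBINT:
  assumes "a \<le> b"
  shows "(LBINT x=a..b. poly P x) = Jab a b P"
proof -
  define F where "F x = (\<Sum>i\<le>degree P. coeff P i * x ^ Suc i / Suc i)" for x :: real
  have d: "(F has_real_derivative poly P x) (at x within S)" for x S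
  proof -
    have t: "((\<lambda>x. coeff P i * x ^ Suc i / Suc i) has_real_derivative coeff P i * x ^ i) (at x within S)" for i
    proof -
      have "((\<lambda>x. x ^ Suc i) has_real_derivative real (Suc i) * x ^ i) (at x within S)"
        using DERIV_pow[of "Suc i" x S] by (simp del: power_Suc of_nat_Suc)
      from DERIV_cdivide[OF DERIV_cmult[OF this, of "coeff P i"], of "Suc i"]
      show ?thesis by (simp del: power_Suc of_nat_Suc)
    qed
    have "(F has_real_derivative (\<Sum>i\<le>degree P. coeff P i * x ^ i)) (at x within S)"
      unfolding F_def by (rule DERIV_sum) (rule t)
    thus ?thesis by (simp add: poly_altdef)
  qed
  have "(LBINT x=a..b. poly P x) = F b - F a"
    by (rule interval_integral_FTC_finite)
      (auto intro: continuous_intros simp: has_real_derivative_iff_has_vector_derivative[symmetric] d)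
  also have "\<dots> = Jab a b P" unfolding F_def Jab_def
    by (simp add: sum_subtractf[symmetric] diff_divide_distrib right_diff_distrib)
  finally show ?thesis .
qed

lemma Jab_add: "Jab a b (P + Q) = Jab a b P + Jab a b Q"
proof -
  define N where "N = Suc (max (degree P) (degree Q))"
  have "degree (P + Q) < N" "degree P < N" "degree Q < N" unfolding N_def
    using degree_add_le_max[of P Q] by auto
  thus ?thesis by (simp add: Jab_bound sum.distrib[symmetric] add_divide_distrib distrib_right)
qed

lemma Jab_smult: "Jab a b (Polynomial.smult c P) = c * Jab a b P"
proof -
  have "degree (Polynomial.smult c P) < Suc (degree P)" "degree P < Suc (degree P)" by auto
  hence "Jab a b (Polynomial.smult c P) = (\<Sum>i<Suc (degree P). c * (coeff P i * (b ^ Suc i - a ^ Suc i) / Suc i))"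
    "Jab a b P = (\<Sum>i<Suc (degree P). coeff P i * (b ^ Suc i - a ^ Suc i) / Suc i)"
    by (simp_all only: Jab_bound coeff_smult mult.assoc times_divide_eq_right)
  thus ?thesis by (simp only: sum_distrib_left)
qed

lemma Jab_minus: "Jab a b (- P) = - Jab a b P"
  using Jab_smult[of a b "-1" P] by simp

lemma Jab_diff: "Jab a b (P - Q) = Jab a b P - Jab a b Q"
  using Jab_add[of a b P "-Q"] Jab_minus[of a b Q] by simp

lemma Jab_0[simp]: "Jab a b 0 = 0"
  unfolding Jab_def by simp

lemma Jab_sum: "Jab a b (\<Sum>i\<in>S. F i) = (\<Sum>i\<in>S. Jab a b (F i))"
  by (induction S rule: infinite_finite_induct) (auto simp: Jab_add)

lemma Jab_monom: "Jab a b (monom c k) = c * (b ^ Suc k - a ^ Suc k) / Suc k"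
proof -
  have "degree (monom c k) < Suc k" using degree_monom_le[of c k] by simp
  hence "Jab a b (monom c k) = (\<Sum>i<Suc k. coeff (monom c k) i * (b ^ Suc i - a ^ Suc i) / Suc i)"
    by (rule Jab_bound)
  also have "\<dots> = (\<Sum>i<k. coeff (monom c k) i * (b ^ Suc i - a ^ Suc i) / Suc i) + c * (b ^ Suc k - a ^ Suc k) / Suc k"
    by (simp del: of_nat_Suc power_Suc)
  also have "(\<Sum>i<k. coeff (monom c k) i * (b ^ Suc i - a ^ Suc i) / Suc i) = 0"
    by (intro sum.neutral) (auto simp: coeff_monom)
  finally show ?thesis by simp
qed

lemma INT_split:
  fixes h :: "real \<Rightarrow> real"
  assumes hA: "\<And>t. t \<in> {-1<..<0} \<Longrightarrow> h t = poly A t"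
    and hB: "\<And>t. t \<in> {0<..<1} \<Longrightarrow> h t = poly B t"
  shows "(LBINT t=-1..1. h t) = Jab (-1) 0 A + Jab 0 1 B"
proof -
  have iA: "set_integrable lborel {-1<..<0} h"
  proof -
    have "set_integrable lborel {-1..0} (poly A)"
      by (rule borel_integrable_atLeastAtMost') (auto intro: continuous_intros)
    hence "set_integrable lborel {-1<..<0} (poly A)"
      by (rule set_integrable_subset) auto
    thus ?thesis using set_integrable_cong[of lborel lborel "{-1<..<0}" "{-1<..<0}" h "poly A"] hA by simp
  qed
  have iB: "set_integrable lborel {0<..<1} h"
  proof -
    have "set_integrable lborel {0..1} (poly B)"
      by (rule borel_integrable_atLeastAtMost') (auto intro: continuous_intros)
    hence "set_integrable lborel {0<..<1} (poly B)"
      by (rule set_integrable_subset) auto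
    thus ?thesis using set_integrable_cong[of lborel lborel "{0<..<1}" "{0<..<1}" h "poly B"] hB by simp
  qed
  have i0: "set_integrable lborel {0} h"
  proof -
    have "(\<lambda>x. indicator {0::real} x *\<^sub>R h x) = (\<lambda>x. h 0 * indicator {0} x)"
      by (auto simp: indicator_def)
    thus ?thesis unfolding set_integrable_def by simp
  qed
  have "set_integrable lborel ({-1<..<0} \<union> {0} \<union> {0<..<1}) h"
    by (intro set_integrable_Un iA iB i0) auto
  moreover have "{-1<..<0} \<union> {0} \<union> {0<..<1} = {-1<..<(1::real)}" by auto
  ultimately have i: "set_integrable lborel {-1<..<1} h" by simp
  have "(LBINT t=-1..0. h t) + (LBINT t=0..1. h t) = (LBINT t=-1..1. h t)"
  proof (rule interval_integral_sum)
    have "einterval (-1) 1 = {-1<..<(1::real)}" by (auto simp: einterval_def one_ereal_def)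
    moreover have "min (-1) (min 0 1) = (-1::ereal)" "max (-1) (max 0 1) = (1::ereal)" "(-1::ereal) \<le> 1" by (auto simp: one_ereal_def max_def)
    ultimately show "interval_lebesgue_integrable lborel (min (-1) (min 0 1)) (max (-1) (max 0 1)) h"
      using i by (simp add: interval_lebesgue_integrable_def)
  qed
  moreover have "(LBINT t=-1..0. h t) = (LBINT t=-1..0. poly A t)"
    by (rule interval_integral_cong) (use hA in \<open>auto simp: einterval_def one_ereal_def\<close>)
  moreover have "(LBINT t=0..1. h t) = (LBINT t=0..1. poly B t)"
    by (rule interval_integral_cong) (use hB in \<open>auto simp: einterval_def one_ereal_def\<close>)
  moreover have e: "ereal (-1) = -1" "ereal 0 = 0" "ereal 1 = 1" by (simp_all add: one_ereal_def zero_ereal_def)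
  ultimately show ?thesis using Jab_LBINT[of "-1" 0 A, unfolded e] Jab_LBINT[of 0 1 B, unfolded e] by simp
qed



definition Lp :: "nat \<Rightarrow> nat \<Rightarrow> real poly" where
  "Lp N l = (\<Prod>i\<in>{..<N}-{l}. [:real i, 1:])"

lemma poly_Lp: "poly (Lp N l) z = (\<Prod>i\<in>{..<N}-{l}. z + real i)"
  unfolding Lp_def by (simp add: poly_prod add.commute)

lemma degree_Lp: "l < N \<Longrightarrow> degree (Lp N l) \<le> N - 1"
proof -
  assume l: "l < N"
  have "degree (Lp N l) \<le> sum (degree \<circ> (\<lambda>i. [:real i, 1:])) ({..<N}-{l})"
    unfolding Lp_def by (rule degree_prod_sum_le) auto
  also have "\<dots> = card ({..<N}-{l})" by simp
  also have "\<dots> = N - 1" using l by simp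
  finally show ?thesis .
qed

lemma D_Lp: "l < N \<Longrightarrow> (z + real l) * poly (Lp N l) z = (\<Prod>i<N. z + real i)"
  unfolding poly_Lp by (simp add: prod.remove[of "{..<N}" l])

lemma frac_Lp:
  assumes "z > 0" "S \<subseteq> {..<N}"
  shows "(\<Sum>l\<in>S. c l / (real l + z)) = poly (\<Sum>l\<in>S. Polynomial.smult (c l) (Lp N l)) z / (\<Prod>i<N. z + real i)"
proof -
  have fS: "finite S" using assms(2) finite_subset by blast
  have "(\<Sum>l\<in>S. c l / (real l + z)) = (\<Sum>l\<in>S. c l * poly (Lp N l) z / (\<Prod>i<N. z + real i))"
  proof (rule sum.cong[OF refl])
    fix l assume "l \<in> S"
    hence l: "l < N" using assms(2) by auto
    have pos: "z + real l > 0" using assms(1) by simp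
    have pos2: "poly (Lp N l) z > 0" unfolding poly_Lp using assms(1) by (intro prod_pos) auto
    show "c l / (real l + z) = c l * poly (Lp N l) z / (\<Prod>i<N. z + real i)"
    proof -
      have "c l * poly (Lp N l) z / ((z + real l) * poly (Lp N l) z) = c l / (z + real l)"
        using pos2 by (metis less_irrefl mult.commute nonzero_mult_divide_mult_cancel_left)
      thus ?thesis unfolding D_Lp[OF l, symmetric] by (simp add: add.commute)
    qed
  qed
  also have "\<dots> = poly (\<Sum>l\<in>S. Polynomial.smult (c l) (Lp N l)) z / (\<Prod>i<N. z + real i)"
    by (simp add: poly_sum sum_divide_distrib)
  finally show ?thesis .
qed

lemma eval_Lp: "l < N \<Longrightarrow> l' < N \<Longrightarrow>
   poly (Lp N l') (- real l) = (if l' = l then (\<Prod>i\<in>{..<N}-{l}. real i - real l) else 0)"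
proof -
  assume l: "l < N" and l': "l' < N"
  show ?thesis
  proof (cases "l' = l")
    case True thus ?thesis by (simp add: poly_Lp)
  next
    case False
    hence "l \<in> {..<N}-{l'}" using l by auto
    hence "(\<Prod>i\<in>{..<N}-{l'}. - real l + real i) = 0"
      by (intro prod_zero) auto
    thus ?thesis using False by (simp add: poly_Lp)
  qed
qed

lemma coeffs_Lp_zero:
  assumes "(\<Sum>l<K. Polynomial.smult (c l) (Lp N l)) = 0" "K \<le> N"
  shows "\<forall>l<K. c l = 0"
proof (intro allI impI)
  fix l assume lK: "l < K"
  hence lN: "l < N" using assms(2) by simp
  have "0 = poly (\<Sum>l<K. Polynomial.smult (c l) (Lp N l)) (- real l)" using assms(1) by simp
  also have "\<dots> = (\<Sum>l'<K. c l' * poly (Lp N l') (- real l))" by (simp add: poly_sum)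
  also have "\<dots> = (\<Sum>l'<K. if l' = l then c l * (\<Prod>i\<in>{..<N}-{l}. real i - real l) else 0)"
    by (intro sum.cong refl) (use lN assms(2) in \<open>auto simp: eval_Lp\<close>)
  also have "\<dots> = c l * (\<Prod>i\<in>{..<N}-{l}. real i - real l)" using lK by simp
  finally have "c l * (\<Prod>i\<in>{..<N}-{l}. real i - real l) = 0" by simp
  moreover have "(\<Prod>i\<in>{..<N}-{l}. real i - real l) \<noteq> 0" by (simp add: prod_zero_iff)
  ultimately show "c l = 0" by simp
qed

lemma degree_sum_Lp: "K \<le> N \<Longrightarrow> degree (\<Sum>l<K. Polynomial.smult (c l) (Lp N l)) \<le> N - 1"
proof (intro degree_sum_le)
  fix l assume "K \<le> N" "l \<in> {..<K}"
  hence "l < N" by simp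
  thus "degree (Polynomial.smult (c l) (Lp N l)) \<le> N - 1" using degree_Lp[of l N] degree_smult_le[of "c l" "Lp N l"] by linarith
qed simp

lemma zero_by_roots:
  fixes p :: "real poly"
  assumes "inj_on g {..<K}" "\<And>j. j < K \<Longrightarrow> poly p (g j) = 0" "degree p < K"
  shows "p = 0"
proof (rule poly_eqI_degree[of "g ` {..<K}"])
  show "\<And>x. x \<in> g ` {..<K} \<Longrightarrow> poly p x = poly 0 x" using assms(2) by auto
  show "degree p < card (g ` {..<K})" using assms by (simp add: card_image)
  show "degree 0 < card (g ` {..<K})" using assms by (simp add: card_image)
qed

lemma ND_core:
  fixes \<alpha> \<beta> :: "nat \<Rightarrow> real" and n m :: nat
  assumes nm: "n = m \<or> n = Suc m"
    and h: "\<And>k. k < n + m \<Longrightarrow>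
      (\<Sum>l<m. \<beta> l / (real l + real k + 1)) + (-1)^k * (\<Sum>l<n. \<alpha> l / (real l + real k + 1)) = 0"
  shows "(\<forall>l<n. \<alpha> l = 0) \<and> (\<forall>l<m. \<beta> l = 0)"
proof -
  define qA where "qA = (\<Sum>l<n. Polynomial.smult (\<alpha> l) (Lp n l))"
  define qB where "qB = (\<Sum>l<m. Polynomial.smult (\<beta> l) (Lp n l))"
  have mn: "m \<le> n" using nm by auto
  have key: "poly qB (real k + 1) + (-1)^k * poly qA (real k + 1) = 0" if k: "k < n + m" for k
  proof -
    define z where "z = real k + 1"
    have z: "z > 0" unfolding z_def by simp
    have D: "(\<Prod>i<n. z + real i) > 0" using z by (intro prod_pos) auto
    have eB: "(\<Sum>l<m. \<beta> l / (real l + z)) = poly qB z / (\<Prod>i<n. z + real i)"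
      unfolding qB_def by (rule frac_Lp[OF z]) (use mn in auto)
    have eA: "(\<Sum>l<n. \<alpha> l / (real l + z)) = poly qA z / (\<Prod>i<n. z + real i)"
      unfolding qA_def by (rule frac_Lp[OF z]) auto
    have "(\<Sum>l<m. \<beta> l / (real l + z)) + (-1)^k * (\<Sum>l<n. \<alpha> l / (real l + z)) = 0"
      using h[OF k] unfolding z_def by (simp add: add.assoc)
    hence "(poly qB z + (-1)^k * poly qA z) / (\<Prod>i<n. z + real i) = 0"
      unfolding eA eB by (simp add: add_divide_distrib)
    thus ?thesis using D unfolding z_def by simp
  qed
  have dA: "degree qA \<le> n - 1" unfolding qA_def by (rule degree_sum_Lp) simp
  have dB: "degree qB \<le> n - 1" unfolding qB_def by (rule degree_sum_Lp) (use mn in simp)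
  show ?thesis
  proof (cases "n = 0")
    case True thus ?thesis using mn by simp
  next
    case n0: False
    have p1: "qB + qA = 0"
    proof (rule zero_by_roots[of "\<lambda>j. real (2*j) + 1" n])
      show "inj_on (\<lambda>j. real (2*j) + 1) {..<n}" by (auto simp: inj_on_def)
      show "poly (qB + qA) (real (2 * j) + 1) = 0" if "j < n" for j
        using key[of "2*j"] that nm by auto
      show "degree (qB + qA) < n" using dA dB n0 degree_add_le[of qB "n-1" qA] by simp
    qed
    have qBA: "qB = - qA" using p1 by (simp add: eq_neg_iff_add_eq_0)
    have qA0: "qA = 0"
    proof (cases "n = m")
      case True
      have "qB - qA = 0"
      proof (rule zero_by_roots[of "\<lambda>j. real (2*j+1) + 1" n])
        show "inj_on (\<lambda>j. real (2*j+1) + 1) {..<n}" by (auto simp: inj_on_def)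
        show "poly (qB - qA) (real (2*j+1) + 1) = 0" if "j < n" for j
          using key[of "2*j+1"] that True by auto
        show "degree (qB - qA) < n" using dA dB n0 degree_diff_le[of qB "n-1" qA] by simp
      qed
      thus ?thesis using qBA by simp
    next
      case False
      hence nS: "n = Suc m" using nm by simp
      define qB' where "qB' = (\<Sum>l<m. Polynomial.smult (\<beta> l) (Lp m l))"
      have LL: "Lp n l = [:real m, 1:] * Lp m l" if "l < m" for l
      proof -
        have "{..<n}-{l} = insert m ({..<m}-{l})" using that nS by auto
        thus ?thesis unfolding Lp_def by simp
      qed
      have qBf: "qB = [:real m, 1:] * qB'"
        unfolding qB_def qB'_def by (simp add: LL sum_distrib_left mult_smult_right)
      have "qB' = 0"
      proof (cases "m = 0")
        case True thus ?thesis unfolding qB'_def by simp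
      next
        case m0: False
        show ?thesis
        proof (rule zero_by_roots[of "\<lambda>j. real (2*j+1) + 1" m])
          show "inj_on (\<lambda>j. real (2*j+1) + 1) {..<m}" by (auto simp: inj_on_def)
          show "poly qB' (real (2*j+1) + 1) = 0" if j: "j < m" for j
          proof -
            have "poly qB (real (2*j+1) + 1) - poly qA (real (2*j+1) + 1) = 0"
              using key[of "2*j+1"] j nS by auto
            hence "2 * poly qB (real (2*j+1) + 1) = 0" using qBA by simp
            hence "(real (2*j+1) + 1 + real m) * poly qB' (real (2*j+1) + 1) = 0"
              unfolding qBf by (simp add: algebra_simps)
            moreover have "real (2*j+1) + 1 + real m \<noteq> 0" by simp
            ultimately show ?thesis by simp
          qed
          show "degree qB' < m" unfolding qB'_def using degree_sum_Lp[of m m \<beta>] m0 by simp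
        qed
      qed
      thus ?thesis using qBA qBf by simp
    qed
    have qB0: "qB = 0" using qBA qA0 by simp
    show ?thesis
      using coeffs_Lp_zero[where K=n and c=\<alpha> and N=n] coeffs_Lp_zero[where K=m and c=\<beta> and N=n] qA0 qB0 mn
      unfolding qA_def qB_def by simp
  qed
qed




definition inV :: "nat \<Rightarrow> real poly \<Rightarrow> bool" where
  "inV n A \<longleftrightarrow> (\<forall>l\<ge>n. coeff A l = 0)"

definition pr :: "real poly \<Rightarrow> real poly \<Rightarrow> real poly \<Rightarrow> real" where
  "pr P A B = Jab (-1) 0 (P * A) + Jab 0 1 (P * B)"

definition mo :: "real poly \<Rightarrow> real poly \<Rightarrow> nat \<Rightarrow> real" where
  "mo A B k = pr (monom 1 k) A B"

definition rf :: "real poly \<Rightarrow> real poly" where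
  "rf p = (\<Sum>i\<le>degree p. monom ((-1)^i * coeff p i) i)"

lemma inV_iff: "inV n A \<longleftrightarrow> (if n = 0 then A = 0 else degree A \<le> n - 1)"
proof (cases "n = 0")
  case True thus ?thesis unfolding inV_def by (auto simp: poly_eq_iff)
next
  case False
  have "inV n A \<longleftrightarrow> degree A \<le> n - 1"
  proof
    assume "inV n A" thus "degree A \<le> n - 1" unfolding inV_def by (intro degree_le) auto
  next
    assume "degree A \<le> n - 1" thus "inV n A" unfolding inV_def using False by (auto intro: coeff_eq_0)
  qed
  thus ?thesis using False by simp
qed

lemma inV_sum_monom: "inV n A \<Longrightarrow> A = (\<Sum>l<n. monom (coeff A l) l)"
  unfolding inV_def by (auto simp: poly_eq_iff coeff_sum coeff_monom not_less)

lemma inV_0[simp]: "inV n 0" unfolding inV_def by simp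
lemma inV_add: "inV n A \<Longrightarrow> inV n B \<Longrightarrow> inV n (A + B)" unfolding inV_def by simp
lemma inV_diff: "inV n A \<Longrightarrow> inV n B \<Longrightarrow> inV n (A - B)" unfolding inV_def by simp
lemma inV_minus: "inV n A \<Longrightarrow> inV n (- A)" unfolding inV_def by simp
lemma inV_smult: "inV n A \<Longrightarrow> inV n (Polynomial.smult c A)" unfolding inV_def by simp
lemma inV_mono: "inV n A \<Longrightarrow> n \<le> n' \<Longrightarrow> inV n' A" unfolding inV_def by simp
lemma inV_sum: "(\<And>i. i \<in> S \<Longrightarrow> inV n (F i)) \<Longrightarrow> inV n (\<Sum>i\<in>S. F i)"
  unfolding inV_def by (auto simp: coeff_sum)
lemma inV_monom: "l < n \<Longrightarrow> inV n (monom c l)" unfolding inV_def by (auto simp: coeff_monom)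

lemma coeff_rf: "coeff (rf p) j = (-1)^j * coeff p j"
  unfolding rf_def by (auto simp: coeff_sum coeff_monom not_le coeff_eq_0)

lemma poly_rf: "poly (rf p) x = poly p (- x)"
proof -
  have "poly (rf p) x = (\<Sum>i\<le>degree p. coeff p i * (- x) ^ i)"
    unfolding rf_def poly_sum poly_monom
  proof (intro sum.cong refl)
    fix i
    have "(- x)^i = (-1)^i * x^i" by (metis mult_minus1 power_mult_distrib)
    thus "(-1) ^ i * coeff p i * x ^ i = coeff p i * (- x) ^ i" by simp
  qed
  thus ?thesis by (simp add: poly_altdef)
qed

lemma rf_rf[simp]: "rf (rf p) = p" by (simp add: poly_eq_iff coeff_rf)
lemma rf_add: "rf (p + q) = rf p + rf q" by (simp add: poly_eq_iff coeff_rf algebra_simps)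
lemma rf_diff: "rf (p - q) = rf p - rf q" by (simp add: poly_eq_iff coeff_rf algebra_simps)
lemma rf_minus: "rf (- p) = - rf p" by (simp add: poly_eq_iff coeff_rf)
lemma rf_smult: "rf (Polynomial.smult c p) = Polynomial.smult c (rf p)" by (simp add: poly_eq_iff coeff_rf)
lemma rf_0[simp]: "rf 0 = 0" by (simp add: poly_eq_iff coeff_rf)
lemma inV_rf: "inV n (rf A) \<longleftrightarrow> inV n A" unfolding inV_def by (simp add: coeff_rf)

lemma pr_add2: "pr P (A + C) (B + D) = pr P A B + pr P C D"
  unfolding pr_def by (simp add: distrib_left Jab_add)
lemma pr_diff2: "pr P (A - C) (B - D) = pr P A B - pr P C D"
  unfolding pr_def by (simp add: right_diff_distrib Jab_diff)
lemma pr_smult2: "pr P (Polynomial.smult c A) (Polynomial.smult c B) = c * pr P A B"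
  unfolding pr_def by (simp add: Jab_smult distrib_left)
lemma pr_minus2: "pr P (- A) (- B) = - pr P A B"
  using pr_smult2[of P "-1" A B] by simp
lemma pr_add1: "pr (P + Q) A B = pr P A B + pr Q A B"
  unfolding pr_def by (simp add: distrib_right Jab_add)
lemma pr_smult1: "pr (Polynomial.smult c P) A B = c * pr P A B"
  unfolding pr_def by (simp add: Jab_smult distrib_left)
lemma pr_diff1: "pr (P - Q) A B = pr P A B - pr Q A B"
  unfolding pr_def by (simp add: left_diff_distrib Jab_diff)
lemma pr_0_1[simp]: "pr 0 A B = 0" unfolding pr_def by simp
lemma pr_sum1: "pr (\<Sum>i\<in>S. F i) A B = (\<Sum>i\<in>S. pr (F i) A B)"
  by (induction S rule: infinite_finite_induct) (auto simp: pr_add1)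
lemma pr_0_2[simp]: "pr P 0 0 = 0" unfolding pr_def by simp
lemma pr_sum2: "pr P (\<Sum>i\<in>S. F i) (\<Sum>i\<in>S. G i) = (\<Sum>i\<in>S. pr P (F i) (G i))"
  by (induction S rule: infinite_finite_induct) (auto simp: pr_add2)

lemma mo_add: "mo (A + C) (B + D) k = mo A B k + mo C D k" unfolding mo_def by (rule pr_add2)
lemma mo_diff: "mo (A - C) (B - D) k = mo A B k - mo C D k" unfolding mo_def by (rule pr_diff2)
lemma mo_smult: "mo (Polynomial.smult c A) (Polynomial.smult c B) k = c * mo A B k" unfolding mo_def by (rule pr_smult2)
lemma mo_minus: "mo (- A) (- B) k = - mo A B k" unfolding mo_def by (rule pr_minus2)
lemma mo_sum: "mo (\<Sum>i\<in>S. F i) (\<Sum>i\<in>S. G i) k = (\<Sum>i\<in>S. mo (F i) (G i) k)" unfolding mo_def by (rule pr_sum2)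
lemma mo_0[simp]: "mo 0 0 k = 0" using mo_smult[of 0 0 0 k] by simp

lemma pr_expand:
  assumes "degree P \<le> d"
  shows "pr P A B = (\<Sum>k\<le>d. coeff P k * mo A B k)"
proof -
  have "pr P A B = pr (\<Sum>k\<le>d. monom (coeff P k) k) A B" using poly_as_sum_of_monoms'[OF assms] by simp
  also have "\<dots> = (\<Sum>k\<le>d. pr (Polynomial.smult (coeff P k) (monom 1 k)) A B)"
    by (simp add: pr_sum1 smult_monom)
  also have "\<dots> = (\<Sum>k\<le>d. coeff P k * mo A B k)" by (simp add: pr_smult1 mo_def)
  finally show ?thesis .
qed

lemma Jm1_monom: "Jab (-1) 0 (monom c j) = c * (-1)^j / (real j + 1)"
  by (simp add: Jab_monom)
lemma J01_monom: "Jab 0 1 (monom c j) = c / (real j + 1)"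
  by (simp add: Jab_monom)

lemma mo_explicit:
  assumes A: "inV n A" and B: "inV m B"
  shows "mo A B k = (\<Sum>l<n. coeff A l * (-1)^(l+k) / (real l + real k + 1))
                   + (\<Sum>l<m. coeff B l / (real l + real k + 1))"
proof -
  have eA: "monom 1 k * A = (\<Sum>l<n. monom (coeff A l) (l + k))"
    by (subst inV_sum_monom[OF A]) (simp add: sum_distrib_left mult_monom add.commute)
  have eB: "monom 1 k * B = (\<Sum>l<m. monom (coeff B l) (l + k))"
    by (subst inV_sum_monom[OF B]) (simp add: sum_distrib_left mult_monom add.commute)
  show ?thesis unfolding mo_def pr_def eA eB Jab_sum Jm1_monom J01_monom
    by (simp add: power_add add.assoc)
qed

lemma mo_rf:
  assumes A: "inV n A" and B: "inV n B"
  shows "mo (rf B) (rf A) k = (-1)^k * mo A B k"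
proof -
  have A': "inV n (rf A)" and B': "inV n (rf B)" using A B by (simp_all add: inV_rf)
  show ?thesis
    unfolding mo_explicit[OF A B] mo_explicit[OF B' A'] coeff_rf
    by (simp add: distrib_left sum_distrib_left power_add mult_ac add.commute)
qed



lemma inV_zero_coeffs: "inV n A \<Longrightarrow> (\<forall>l<n. coeff A l = 0) \<Longrightarrow> A = 0"
  unfolding inV_def by (auto simp: poly_eq_iff not_less[symmetric])

lemma ND_poly:
  assumes sh: "n = m \<or> n = Suc m \<or> m = Suc n" and A: "inV n A" and B: "inV m B"
    and h: "\<And>k. k < n + m \<Longrightarrow> mo A B k = 0"
  shows "A = 0 \<and> B = 0"
proof -
  define \<alpha> where "\<alpha> l = (-1)^l * coeff A l" for l
  define \<beta> where "\<beta> l = coeff B l" for l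
  have eq: "mo A B k = (\<Sum>l<m. \<beta> l / (real l + real k + 1)) + (-1)^k * (\<Sum>l<n. \<alpha> l / (real l + real k + 1))" for k
    unfolding mo_explicit[OF A B] \<alpha>_def \<beta>_def
    by (simp add: sum_distrib_left power_add mult_ac add.commute)
  have hh: "(\<Sum>l<m. \<beta> l / (real l + real k + 1)) + (-1)^k * (\<Sum>l<n. \<alpha> l / (real l + real k + 1)) = 0"
    if "k < n + m" for k using h[OF that] eq[of k] by simp
  have res: "(\<forall>l<n. \<alpha> l = 0) \<and> (\<forall>l<m. \<beta> l = 0)"
  proof (cases "m = Suc n")
    case False
    hence "n = m \<or> n = Suc m" using sh by auto
    thus ?thesis using ND_core[of n m \<beta> \<alpha>] hh by blast
  next
    case True
    have "(\<Sum>l<n. \<alpha> l / (real l + real k + 1)) + (-1)^k * (\<Sum>l<m. \<beta> l / (real l + real k + 1)) = 0"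
      if "k < m + n" for k
    proof -
      have "(-1)^k * ((\<Sum>l<m. \<beta> l / (real l + real k + 1)) + (-1)^k * (\<Sum>l<n. \<alpha> l / (real l + real k + 1))) = 0"
        using hh[of k] that by simp
      thus ?thesis by (simp add: distrib_left mult.assoc[symmetric] power_add[symmetric] add.commute)
    qed
    thus ?thesis using ND_core[of m n \<alpha> \<beta>] True by blast
  qed
  have "\<forall>l<n. coeff A l = 0" using res unfolding \<alpha>_def by simp
  moreover have "\<forall>l<m. coeff B l = 0" using res unfolding \<beta>_def by simp
  ultimately show ?thesis using inV_zero_coeffs A B by blast
qed

definition bA :: "nat \<Rightarrow> nat \<Rightarrow> real poly" where "bA n i = (if i < n then monom 1 i else 0)"
definition bB :: "nat \<Rightarrow> nat \<Rightarrow> real poly" where "bB n i = (if i < n then 0 else monom 1 (i - n))"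
definition GG :: "nat \<Rightarrow> nat \<Rightarrow> nat \<Rightarrow> real" where "GG n i k = mo (bA n i) (bB n i) k"
definition mkA :: "nat \<Rightarrow> nat \<Rightarrow> (nat \<Rightarrow> real) \<Rightarrow> real poly" where
  "mkA n N x = (\<Sum>i<N. Polynomial.smult (x i) (bA n i))"
definition mkB :: "nat \<Rightarrow> nat \<Rightarrow> (nat \<Rightarrow> real) \<Rightarrow> real poly" where
  "mkB n N x = (\<Sum>i<N. Polynomial.smult (x i) (bB n i))"
definition cvec :: "nat \<Rightarrow> real poly \<Rightarrow> real poly \<Rightarrow> nat \<Rightarrow> real" where
  "cvec n A B i = (if i < n then coeff A i else coeff B (i - n))"

lemma mo_mk: "mo (mkA n N x) (mkB n N x) k = (\<Sum>i<N. x i * GG n i k)"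
  unfolding mkA_def mkB_def GG_def mo_sum mo_smult ..

lemma pr_mk: "pr P (mkA n N x) (mkB n N x) = (\<Sum>i<N. x i * pr P (bA n i) (bB n i))"
  unfolding mkA_def mkB_def pr_sum2 pr_smult2 ..

lemma inV_bA: "inV n (bA n i)" unfolding bA_def by (auto intro: inV_monom)
lemma inV_bB: "i < n + m \<Longrightarrow> inV m (bB n i)" unfolding bB_def by (auto intro: inV_monom)

lemma inV_mkA: "inV n (mkA n N x)" unfolding mkA_def by (intro inV_sum inV_smult inV_bA)
lemma inV_mkB: "inV m (mkB n (n+m) x)" unfolding mkB_def by (intro inV_sum inV_smult inV_bB) auto

lemma coeff_mkA: "l < n \<Longrightarrow> n \<le> N \<Longrightarrow> coeff (mkA n N x) l = x l"
proof -
  assume l: "l < n" and N: "n \<le> N"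
  have "coeff (mkA n N x) l = (\<Sum>i<N. if i = l then x i else 0)"
    unfolding mkA_def bA_def coeff_sum by (intro sum.cong refl) (use l in \<open>auto simp: coeff_monom\<close>)
  also have "\<dots> = x l" using l N by simp
  finally show ?thesis .
qed

lemma coeff_mkB: "l < m \<Longrightarrow> coeff (mkB n (n+m) x) l = x (n + l)"
proof -
  assume l: "l < m"
  have "coeff (mkB n (n+m) x) l = (\<Sum>i<n+m. if i = n + l then x i else 0)"
    unfolding mkB_def bB_def coeff_sum by (intro sum.cong refl) (auto simp: coeff_monom)
  also have "\<dots> = x (n + l)" using l by simp
  finally show ?thesis .
qed

lemma mk_cvec:
  assumes A: "inV n A" and B: "inV m B"
  shows "mkA n (n+m) (cvec n A B) = A" "mkB n (n+m) (cvec n A B) = B"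
proof -
  show "mkA n (n+m) (cvec n A B) = A"
  proof (rule poly_eqI)
    fix l show "coeff (mkA n (n+m) (cvec n A B)) l = coeff A l"
    proof (cases "l < n")
      case True thus ?thesis by (simp add: coeff_mkA cvec_def)
    next
      case False
      hence "coeff A l = 0" using A unfolding inV_def by simp
      moreover have "coeff (mkA n (n+m) (cvec n A B)) l = 0" using inV_mkA False unfolding inV_def by simp
      ultimately show ?thesis by simp
    qed
  qed
  show "mkB n (n+m) (cvec n A B) = B"
  proof (rule poly_eqI)
    fix l show "coeff (mkB n (n+m) (cvec n A B)) l = coeff B l"
    proof (cases "l < m")
      case True thus ?thesis by (simp add: coeff_mkB cvec_def)
    next
      case False
      hence "coeff B l = 0" using B unfolding inV_def by simp
      moreover have "coeff (mkB n (n+m) (cvec n A B)) l = 0" using inV_mkB[of m n] False unfolding inV_def by simp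
      ultimately show ?thesis by simp
    qed
  qed
qed

definition good :: "nat \<Rightarrow> nat \<Rightarrow> bool" where "good n m \<longleftrightarrow> n = m \<or> n = Suc m \<or> m = Suc n"

lemma GG_inj:
  assumes "good n m" "\<forall>k<n+m. (\<Sum>i<n+m. x i * GG n i k) = 0"
  shows "\<forall>i<n+m. x i = 0"
proof -
  have "mkA n (n+m) x = 0 \<and> mkB n (n+m) x = 0"
  proof (rule ND_poly)
    show "n = m \<or> n = Suc m \<or> m = Suc n" using assms(1) by (simp add: good_def)
    show "inV n (mkA n (n + m) x)" by (rule inV_mkA)
    show "inV m (mkB n (n + m) x)" by (rule inV_mkB)
    show "mo (mkA n (n + m) x) (mkB n (n + m) x) k = 0" if "k < n + m" for k
      using assms(2) that by (simp add: mo_mk)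
  qed
  hence z: "mkA n (n+m) x = 0" "mkB n (n+m) x = 0" by auto
  show ?thesis
  proof (intro allI impI)
    fix i assume i: "i < n + m"
    show "x i = 0"
    proof (cases "i < n")
      case True thus ?thesis using coeff_mkA[of i n "n+m" x] z by simp
    next
      case False
      hence "i - n < m" using i by simp
      thus ?thesis using coeff_mkB[of "i - n" m n x] z False by simp
    qed
  qed
qed

lemmas GG_LA = LA_main[OF GG_inj]



lemma GG_LA2:
  assumes g: "good n m"
  shows "\<And>b. \<exists>x. \<forall>k<n+m. (\<Sum>i<n+m. x i * GG n i k) = b k"
    and "\<And>y. (\<forall>i<n+m. (\<Sum>k<n+m. GG n i k * y k) = 0) \<Longrightarrow> (\<forall>k<n+m. y k = 0)"
    and "\<And>b. \<exists>y. \<forall>i<n+m. (\<Sum>k<n+m. GG n i k * y k) = b i"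
  using LA_main[where N="n+m" and G="GG n", OF GG_inj[OF g]] by blast+

lemma LBINT_mo:
  "(LBINT x=-1..1. (poly A x * indicator {-1..0} x + poly B x * indicator {0..1} x) * x ^ k) = mo A B k"
proof -
  have "(LBINT x=-1..1. (poly A x * indicator {-1..0} x + poly B x * indicator {0..1} x) * x ^ k)
      = Jab (-1) 0 (monom 1 k * A) + Jab 0 1 (monom 1 k * B)"
    by (rule INT_split) (auto simp: indicator_def poly_monom)
  thus ?thesis unfolding mo_def pr_def .
qed

lemma typeI_cond_iff: "typeI_cond n m A B \<longleftrightarrow>
   inV n A \<and> inV m B \<and> (\<forall>k. k + 2 \<le> n + m \<longrightarrow> mo A B k = 0) \<and> mo A B (n + m - 1) = 1"
  unfolding typeI_cond_def LBINT_mo inV_iff[symmetric] ..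

lemma typeI_ex1:
  assumes g: "good n m" and N: "1 \<le> n + m"
  shows "\<exists>!AB. typeI_cond n m (fst AB) (snd AB)"
proof -
  obtain x where x: "\<forall>k<n+m. (\<Sum>i<n+m. x i * GG n i k) = (if k = n + m - 1 then 1 else 0)"
    using GG_LA2(1)[OF g, where b="\<lambda>k. if k = n + m - 1 then 1 else 0"] by auto
  have ex: "typeI_cond n m (mkA n (n+m) x) (mkB n (n+m) x)"
    unfolding typeI_cond_iff mo_mk using x N inV_mkA inV_mkB by auto
  show ?thesis
  proof (rule ex1I[of _ "(mkA n (n+m) x, mkB n (n+m) x)"])
    show "typeI_cond n m (fst (mkA n (n+m) x, mkB n (n+m) x)) (snd (mkA n (n+m) x, mkB n (n+m) x))"
      using ex by simp
    fix AB assume h: "typeI_cond n m (fst AB) (snd AB)"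
    have "fst AB - mkA n (n+m) x = 0 \<and> snd AB - mkB n (n+m) x = 0"
    proof (rule ND_poly)
      show "n = m \<or> n = Suc m \<or> m = Suc n" using g by (simp add: good_def)
      show "inV n (fst AB - mkA n (n + m) x)" using h ex unfolding typeI_cond_iff by (auto intro: inV_diff)
      show "inV m (snd AB - mkB n (n + m) x)" using h ex unfolding typeI_cond_iff by (auto intro: inV_diff)
      show "mo (fst AB - mkA n (n + m) x) (snd AB - mkB n (n + m) x) k = 0" if k: "k < n + m" for k
      proof (cases "k = n + m - 1")
        case True thus ?thesis using h ex unfolding typeI_cond_iff mo_diff by simp
      next
        case False
        hence "k + 2 \<le> n + m" using k by simp
        thus ?thesis using h ex unfolding typeI_cond_iff mo_diff by simp
      qed
    qed
    thus "AB = (mkA n (n + m) x, mkB n (n + m) x)" by (cases AB) simp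
  qed
qed

lemma typeI_pair_cond: "good n m \<Longrightarrow> 1 \<le> n + m \<Longrightarrow>
    typeI_cond n m (fst (typeI_pair n m)) (snd (typeI_pair n m))"
  unfolding typeI_pair_def by (rule theI'[OF typeI_ex1])

lemma typeI_pair_eq: "good n m \<Longrightarrow> 1 \<le> n + m \<Longrightarrow> typeI_cond n m A B \<Longrightarrow> typeI_pair n m = (A, B)"
  unfolding typeI_pair_def by (rule the1_equality[OF typeI_ex1]) auto

lemma LA_Q_neg: "x \<in> {-1<..<0} \<Longrightarrow> LA_Q n m x = poly (fst (typeI_pair n m)) x"
  unfolding LA_Q_def by (auto simp: indicator_def)
lemma LA_Q_pos: "x \<in> {0<..<1} \<Longrightarrow> LA_Q n m x = poly (snd (typeI_pair n m)) x"
  unfolding LA_Q_def by (auto simp: indicator_def)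

definition orth :: "nat \<Rightarrow> nat \<Rightarrow> real poly \<Rightarrow> bool" where
  "orth n m P \<longleftrightarrow> (\<forall>A B. inV n A \<longrightarrow> inV m B \<longrightarrow> pr P A B = 0)"

lemma mult_monom_smult: "(P::real poly) * monom c l = Polynomial.smult c (P * monom 1 l)"
proof -
  have "P * monom c l = P * Polynomial.smult c (monom 1 l)" by (simp add: smult_monom)
  also have "\<dots> = Polynomial.smult c (P * monom 1 l)" by (rule mult_smult_right)
  finally show ?thesis .
qed

lemma pr_explicit:
  assumes A: "inV n A" and B: "inV m B"
  shows "pr P A B = (\<Sum>l<n. coeff A l * Jab (-1) 0 (P * monom 1 l)) + (\<Sum>l<m. coeff B l * Jab 0 1 (P * monom 1 l))"
proof -
  have eA: "P * A = (\<Sum>l<n. Polynomial.smult (coeff A l) (P * monom 1 l))"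
  proof -
    have "P * A = P * (\<Sum>l<n. monom (coeff A l) l)" using inV_sum_monom[OF A] by (rule arg_cong)
    also have "\<dots> = (\<Sum>l<n. P * monom (coeff A l) l)" by (rule sum_distrib_left)
    also have "\<dots> = (\<Sum>l<n. Polynomial.smult (coeff A l) (P * monom 1 l))"
      by (rule sum.cong[OF refl], rule mult_monom_smult)
    finally show ?thesis .
  qed
  have eB: "P * B = (\<Sum>l<m. Polynomial.smult (coeff B l) (P * monom 1 l))"
  proof -
    have "P * B = P * (\<Sum>l<m. monom (coeff B l) l)" using inV_sum_monom[OF B] by (rule arg_cong)
    also have "\<dots> = (\<Sum>l<m. P * monom (coeff B l) l)" by (rule sum_distrib_left)
    also have "\<dots> = (\<Sum>l<m. Polynomial.smult (coeff B l) (P * monom 1 l))"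
      by (rule sum.cong[OF refl], rule mult_monom_smult)
    finally show ?thesis .
  qed
  show ?thesis unfolding pr_def eA eB Jab_sum Jab_smult ..
qed

lemma ereal_consts: "ereal (-1) = -1" "ereal 0 = 0" "ereal 1 = 1"
  by (simp_all add: one_ereal_def zero_ereal_def)

lemma LBINT_m1: "(LBINT x=-1..0. poly P x * x ^ k) = Jab (-1) 0 (P * monom 1 k)"
  using Jab_LBINT[of "-1" 0 "P * monom 1 k", unfolded ereal_consts] by (simp add: poly_monom)
lemma LBINT_01: "(LBINT x=0..1. poly P x * x ^ k) = Jab 0 1 (P * monom 1 k)"
  using Jab_LBINT[of 0 1 "P * monom 1 k", unfolded ereal_consts] by (simp add: poly_monom)

lemma LAP_cond: "((\<forall>k<n. (LBINT x=-1..0. poly P x * x ^ k) = 0) \<and> (\<forall>k<m. (LBINT x=0..1. poly P x * x ^ k) = 0))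
   \<longleftrightarrow> orth n m P"
  unfolding LBINT_m1 LBINT_01
proof
  assume h: "(\<forall>k<n. Jab (-1) 0 (P * monom 1 k) = 0) \<and> (\<forall>k<m. Jab 0 1 (P * monom 1 k) = 0)"
  show "orth n m P" unfolding orth_def
  proof (intro allI impI)
    fix A B assume "inV n A" "inV m B"
    thus "pr P A B = 0" unfolding pr_explicit[OF \<open>inV n A\<close> \<open>inV m B\<close>] using h by simp
  qed
next
  assume h: "orth n m P"
  have "Jab (-1) 0 (P * monom 1 k) = 0" if "k < n" for k
    using h[unfolded orth_def, rule_format, of "monom 1 k" 0] that by (simp add: inV_monom pr_def)
  moreover have "Jab 0 1 (P * monom 1 k) = 0" if "k < m" for k
    using h[unfolded orth_def, rule_format, of 0 "monom 1 k"] that by (simp add: inV_monom pr_def)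
  ultimately show "(\<forall>k<n. Jab (-1) 0 (P * monom 1 k) = 0) \<and> (\<forall>k<m. Jab 0 1 (P * monom 1 k) = 0)" by blast
qed

lemma orth_GG: "orth n m P \<longleftrightarrow> (\<forall>i<n+m. pr P (bA n i) (bB n i) = 0)"
proof
  assume "orth n m P" thus "\<forall>i<n+m. pr P (bA n i) (bB n i) = 0"
    unfolding orth_def using inV_bA inV_bB by blast
next
  assume h: "\<forall>i<n+m. pr P (bA n i) (bB n i) = 0"
  show "orth n m P" unfolding orth_def
  proof (intro allI impI)
    fix A B assume A: "inV n A" and B: "inV m B"
    have "pr P A B = pr P (mkA n (n+m) (cvec n A B)) (mkB n (n+m) (cvec n A B))"
      using mk_cvec[OF A B] by simp
    also have "\<dots> = 0" unfolding pr_mk using h by simp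
    finally show "pr P A B = 0" .
  qed
qed

lemma pr_basis_expand:
  assumes "inV (Suc N) R"
  shows "pr R A B = (\<Sum>k<Suc N. coeff R k * mo A B k)"
proof -
  have "degree R \<le> N" using assms unfolding inV_iff by (auto split: if_splits)
  thus ?thesis using pr_expand[of R N A B] by (simp add: lessThan_Suc_atMost)
qed

lemma orth_zero:
  assumes g: "good n m" and R: "inV (n+m) R" and o: "orth n m R"
  shows "R = 0"
proof -
  have key: "\<forall>i<n+m. (\<Sum>k<n+m. GG n i k * coeff R k) = 0"
  proof (intro allI impI)
    fix i assume i: "i < n + m"
    have "0 = pr R (bA n i) (bB n i)" using o i unfolding orth_GG by simp
    also have "\<dots> = (\<Sum>k<Suc (n+m). coeff R k * GG n i k)"
      unfolding GG_def by (rule pr_basis_expand) (use inV_mono[OF R, of "Suc (n+m)"] in simp)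
    also have "\<dots> = (\<Sum>k<n+m. coeff R k * GG n i k)"
      using R by (simp add: inV_def)
    also have "\<dots> = (\<Sum>k<n+m. GG n i k * coeff R k)"
      by (simp only: mult.commute)
    finally show "(\<Sum>k<n+m. GG n i k * coeff R k) = 0" by simp
  qed
  have "\<forall>k<n+m. coeff R k = 0" using GG_LA2(2)[OF g key] .
  thus ?thesis using R inV_zero_coeffs by blast
qed

lemma typeII_ex1:
  assumes g: "good n m"
  shows "\<exists>!P. degree P = n + m \<and> lead_coeff P = 1 \<and> orth n m P"
proof -
  define N where "N = n + m"
  obtain y where y: "\<forall>i<N. (\<Sum>k<N. GG n i k * y k) = - GG n i N"
    using GG_LA2(3)[OF g, where b="\<lambda>i. - GG n i (n + m)"] unfolding N_def by auto
  define P where "P = monom 1 N + (\<Sum>k<N. monom (y k) k)"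
  have cP: "coeff P j = (if j = N then 1 else if j < N then y j else 0)" for j
    unfolding P_def by (auto simp: coeff_sum coeff_monom)
  have dP: "degree P = N"
  proof (rule antisym)
    show "degree P \<le> N" by (rule degree_le) (simp add: cP)
    show "N \<le> degree P" by (rule le_degree) (simp add: cP)
  qed
  have lP: "lead_coeff P = 1" using dP cP by simp
  have oP: "orth n m P" unfolding orth_GG
  proof (intro allI impI)
    fix i assume i: "i < n + m"
    have "pr P (bA n i) (bB n i) = (\<Sum>k\<le>N. coeff P k * GG n i k)"
      unfolding GG_def by (rule pr_expand) (simp add: dP)
    also have "\<dots> = (\<Sum>k<N. coeff P k * GG n i k) + coeff P N * GG n i N"
      by (simp add: lessThan_Suc_atMost[symmetric])
    also have "\<dots> = (\<Sum>k<N. GG n i k * y k) + GG n i N"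
    proof -
      have "(\<Sum>k<N. coeff P k * GG n i k) = (\<Sum>k<N. GG n i k * y k)"
        by (intro sum.cong refl) (simp add: cP)
      moreover have "coeff P N * GG n i N = GG n i N" by (simp add: cP)
      ultimately show ?thesis by simp
    qed
    also have "\<dots> = 0" using y i unfolding N_def by simp
    finally show "pr P (bA n i) (bB n i) = 0" .
  qed
  show ?thesis
  proof (rule ex1I[of _ P])
    show "degree P = n + m \<and> lead_coeff P = 1 \<and> orth n m P" using dP lP oP N_def by simp
    fix Q assume Q: "degree Q = n + m \<and> lead_coeff Q = 1 \<and> orth n m Q"
    have "Q - P = 0"
    proof (rule orth_zero[OF g])
      show "inV (n + m) (Q - P)" unfolding inV_def
      proof (intro allI impI)
        fix l assume l: "n + m \<le> l"
        show "coeff (Q - P) l = 0"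
        proof (cases "l = n + m")
          case True
          have "coeff Q (n + m) = 1" using Q by metis
          thus ?thesis using True lP dP N_def by simp
        next
          case False
          hence "l > degree Q" "l > degree P" using l Q dP N_def by auto
          thus ?thesis by (simp add: coeff_eq_0)
        qed
      qed
      show "orth n m (Q - P)" using Q oP unfolding orth_def by (simp add: pr_diff1)
    qed
    thus "Q = P" by simp
  qed
qed

lemma LA_P_alt: "LA_P n m = (THE P. degree P = n + m \<and> lead_coeff P = 1 \<and> orth n m P)"
  unfolding LA_P_def LAP_cond[symmetric] by (simp only: conj_assoc)

lemma LA_P_props: "good n m \<Longrightarrow> degree (LA_P n m) = n + m \<and> lead_coeff (LA_P n m) = 1 \<and> orth n m (LA_P n m)"
  unfolding LA_P_alt by (rule theI'[OF typeII_ex1])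



definition QA :: "nat \<Rightarrow> nat \<Rightarrow> real poly" where "QA n m = fst (typeI_pair n m)"
definition QB :: "nat \<Rightarrow> nat \<Rightarrow> real poly" where "QB n m = snd (typeI_pair n m)"

lemma Qprops:
  assumes "good n m" "1 \<le> n + m"
  shows "inV n (QA n m)" "inV m (QB n m)" "\<And>k. k + 2 \<le> n + m \<Longrightarrow> mo (QA n m) (QB n m) k = 0"
        "mo (QA n m) (QB n m) (n + m - 1) = 1"
  using typeI_pair_cond[OF assms] unfolding typeI_cond_iff QA_def QB_def by auto

lemma good_jj: "good j j" and good_Sj: "good (Suc j) j" and good_jS: "good j (Suc j)"
  unfolding good_def by auto

lemma pr_top:
  assumes "degree P \<le> d" "\<And>k. k < d \<Longrightarrow> mo A B k = 0"
  shows "pr P A B = coeff P d * mo A B d"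
proof -
  have "pr P A B = (\<Sum>k\<le>d. coeff P k * mo A B k)" by (rule pr_expand[OF assms(1)])
  also have "\<dots> = (\<Sum>k<d. coeff P k * mo A B k) + coeff P d * mo A B d"
    by (simp add: lessThan_Suc_atMost[symmetric])
  also have "(\<Sum>k<d. coeff P k * mo A B k) = 0" using assms(2) by simp
  finally show ?thesis by simp
qed

lemma mo_parity:
  assumes A: "inV n A" and B: "inV n B" and e1: "rf B = Polynomial.smult e A" and e2: "rf A = Polynomial.smult e B"
  shows "e * mo A B k = (-1)^k * mo A B k"
  using mo_rf[OF A B, of k] unfolding e1 e2 mo_smult .

lemma Qjj_odd:
  assumes j: "1 \<le> j"
  shows "QA j j = - rf (QB j j)" "QB j j = - rf (QA j j)"
proof -
  note P = Qprops[OF good_jj, of j]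
  have jj: "1 \<le> j + j" using j by simp
  have "typeI_cond j j (- rf (QB j j)) (- rf (QA j j))"
    unfolding typeI_cond_iff
  proof (intro conjI allI impI)
    show "inV j (- rf (QB j j))" "inV j (- rf (QA j j))" using P(1,2)[OF jj] by (simp_all add: inV_minus inV_rf)
    have m: "mo (- rf (QB j j)) (- rf (QA j j)) k = - ((-1)^k * mo (QA j j) (QB j j) k)" for k
      unfolding mo_minus[symmetric] rf_minus[symmetric] using mo_rf[OF P(1)[OF jj] P(2)[OF jj]]
      by (simp add: rf_minus mo_minus)
    show "mo (- rf (QB j j)) (- rf (QA j j)) k = 0" if "k + 2 \<le> j + j" for k
      unfolding m using P(3)[OF jj that] by simp
    have "odd (j + j - 1)" using j by simp
    thus "mo (- rf (QB j j)) (- rf (QA j j)) (j + j - 1) = 1"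
      unfolding m using P(4)[OF jj] by simp
  qed
  from typeI_pair_eq[OF good_jj jj this]
  have E: "typeI_pair j j = (- rf (QB j j), - rf (QA j j))" .
  show "QA j j = - rf (QB j j)" using arg_cong[OF E, of fst] unfolding QA_def by (simp only: fst_conv)
  show "QB j j = - rf (QA j j)" using arg_cong[OF E, of snd] unfolding QB_def by (simp only: snd_conv)
qed

lemma Qjj_even_mom:
  assumes j: "1 \<le> j" and k: "even k"
  shows "mo (QA j j) (QB j j) k = 0"
proof -
  have jj: "1 \<le> j + j" using j by simp
  note P = Qprops[OF good_jj jj]
  have "(-1) * mo (QA j j) (QB j j) k = (-1)^k * mo (QA j j) (QB j j) k"
  proof (rule mo_parity[OF P(1) P(2)])
    show "rf (QB j j) = Polynomial.smult (- 1) (QA j j)" using Qjj_odd(1)[OF j] by simp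
    show "rf (QA j j) = Polynomial.smult (- 1) (QB j j)" using Qjj_odd(2)[OF j] by simp
  qed
  thus ?thesis using k by simp
qed

lemma Q_reflect:
  shows "QA j (Suc j) = rf (QB (Suc j) j)" "QB j (Suc j) = rf (QA (Suc j) j)"
proof -
  have s: "1 \<le> Suc j + j" by simp
  note P = Qprops[OF good_Sj s]
  have A': "inV (Suc j) (QA (Suc j) j)" and B': "inV (Suc j) (QB (Suc j) j)"
    using P(1) P(2) inV_mono by auto
  have m: "mo (rf (QB (Suc j) j)) (rf (QA (Suc j) j)) k = (-1)^k * mo (QA (Suc j) j) (QB (Suc j) j) k" for k
    by (rule mo_rf[OF A' B'])
  have "typeI_cond j (Suc j) (rf (QB (Suc j) j)) (rf (QA (Suc j) j))"
    unfolding typeI_cond_iff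
  proof (intro conjI allI impI)
    show "inV j (rf (QB (Suc j) j))" "inV (Suc j) (rf (QA (Suc j) j))" using P(1,2) by (simp_all add: inV_rf)
    show "mo (rf (QB (Suc j) j)) (rf (QA (Suc j) j)) k = 0" if "k + 2 \<le> j + Suc j" for k
      unfolding m using P(3) that by simp
    show "mo (rf (QB (Suc j) j)) (rf (QA (Suc j) j)) (j + Suc j - 1) = 1"
      unfolding m using P(4) by simp
  qed
  from typeI_pair_eq[OF good_jS _ this]
  have E: "typeI_pair j (Suc j) = (rf (QB (Suc j) j), rf (QA (Suc j) j))" by simp
  show "QA j (Suc j) = rf (QB (Suc j) j)" using arg_cong[OF E, of fst] unfolding QA_def by (simp only: fst_conv)
  show "QB j (Suc j) = rf (QA (Suc j) j)" using arg_cong[OF E, of snd] unfolding QB_def by (simp only: snd_conv)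
qed

definition cc :: "nat \<Rightarrow> real" where
  "cc j = mo (QA j (Suc j) - QA (Suc j) j) (QB j (Suc j) - QB (Suc j) j) (2*j+1)"

lemma D_moms:
  "k < 2*j \<Longrightarrow> mo (QA j (Suc j) - QA (Suc j) j) (QB j (Suc j) - QB (Suc j) j) k = 0"
  "k = 2*j \<Longrightarrow> mo (QA j (Suc j) - QA (Suc j) j) (QB j (Suc j) - QB (Suc j) j) k = 0"
proof -
  have s1: "1 \<le> j + Suc j" and s2: "1 \<le> Suc j + j" by simp_all
  note P1 = Qprops[OF good_jS s1] and P2 = Qprops[OF good_Sj s2]
  show "k < 2*j \<Longrightarrow> mo (QA j (Suc j) - QA (Suc j) j) (QB j (Suc j) - QB (Suc j) j) k = 0"
    unfolding mo_diff using P1(3)[of k] P2(3)[of k] by simp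
  show "k = 2*j \<Longrightarrow> mo (QA j (Suc j) - QA (Suc j) j) (QB j (Suc j) - QB (Suc j) j) k = 0"
    unfolding mo_diff using P1(4) P2(4) by (simp add: mult_2)
qed

lemma D_rel:
  shows "QA j (Suc j) - QA (Suc j) j = Polynomial.smult (cc j) (QA (Suc j) (Suc j))"
    and "QB j (Suc j) - QB (Suc j) j = Polynomial.smult (cc j) (QB (Suc j) (Suc j))"
proof -
  have s1: "1 \<le> j + Suc j" and s2: "1 \<le> Suc j + j" and s3: "1 \<le> Suc j + Suc j" by simp_all
  note P1 = Qprops[OF good_jS s1] and P2 = Qprops[OF good_Sj s2] and P3 = Qprops[OF good_jj s3]
  define X where "X = QA j (Suc j) - QA (Suc j) j - Polynomial.smult (cc j) (QA (Suc j) (Suc j))"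
  define Y where "Y = QB j (Suc j) - QB (Suc j) j - Polynomial.smult (cc j) (QB (Suc j) (Suc j))"
  have "X = 0 \<and> Y = 0"
  proof (rule ND_poly)
    show "Suc j = Suc j \<or> Suc j = Suc (Suc j) \<or> Suc j = Suc (Suc j)" by simp
    show "inV (Suc j) X" unfolding X_def
      using P1(1) P2(1) P3(1) by (intro inV_diff inV_smult) (auto intro: inV_mono)
    show "inV (Suc j) Y" unfolding Y_def
      using P1(2) P2(2) P3(2) by (intro inV_diff inV_smult) (auto intro: inV_mono)
    show "mo X Y k = 0" if k: "k < Suc j + Suc j" for k
    proof -
      have e: "mo X Y k = mo (QA j (Suc j) - QA (Suc j) j) (QB j (Suc j) - QB (Suc j) j) k
                 - cc j * mo (QA (Suc j) (Suc j)) (QB (Suc j) (Suc j)) k"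
        unfolding X_def Y_def mo_diff mo_smult ..
      show ?thesis
      proof (cases "k \<le> 2*j")
        case True
        hence "mo (QA j (Suc j) - QA (Suc j) j) (QB j (Suc j) - QB (Suc j) j) k = 0"
          using D_moms[of k j] by (cases "k = 2*j") auto
        moreover have "mo (QA (Suc j) (Suc j)) (QB (Suc j) (Suc j)) k = 0" using P3(3)[of k] True by simp
        ultimately show ?thesis unfolding e by simp
      next
        case False
        hence "k = 2*j+1" using k by simp
        thus ?thesis unfolding e cc_def using P3(4) by (simp add: mult_2)
      qed
    qed
  qed
  thus "QA j (Suc j) - QA (Suc j) j = Polynomial.smult (cc j) (QA (Suc j) (Suc j))"
   and "QB j (Suc j) - QB (Suc j) j = Polynomial.smult (cc j) (QB (Suc j) (Suc j))"
    unfolding X_def Y_def by simp_all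
qed

lemma LA_a_eq: "LA_a (Suc j) = cc j"
proof -
  define Pa where "Pa = LA_P (Suc j) j"
  define Pb where "Pb = LA_P j (Suc j)"
  define Pc where "Pc = LA_P j j"
  note Ha = LA_P_props[OF good_Sj, of j, folded Pa_def]
  note Hb = LA_P_props[OF good_jS, of j, folded Pb_def]
  note Hc = LA_P_props[OF good_jj, of j, folded Pc_def]
  have dPa: "degree Pa = 2*j+1" using Ha by (simp add: mult_2)
  have dPb: "degree Pb = 2*j+1" using Hb by (simp add: mult_2)
  have dPc: "degree Pc = 2*j" using Hc by (simp add: mult_2)
  have cPa: "coeff Pa (2*j+1) = 1" using Ha dPa by simp
  have cPb: "coeff Pb (2*j+1) = 1" using Hb dPb by simp
  have cPc: "coeff Pc (2*j) = 1" using Hc dPc by simp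
  define t where "t = coeff (Pa - Pb) (2*j)"
  define R where "R = Pa - Pb - Polynomial.smult t Pc"
  have "R = 0"
  proof (rule orth_zero[OF good_jj])
    show "inV (j + j) R" unfolding inV_def
    proof (intro allI impI)
      fix l assume l: "j + j \<le> l"
      show "coeff R l = 0"
      proof (cases "l = 2*j")
        case True thus ?thesis using cPc unfolding R_def t_def by simp
      next
        case False
        hence l2: "l > degree Pc" using l dPc by simp
        show ?thesis
        proof (cases "l = 2*j+1")
          case True thus ?thesis using cPa cPb l2 unfolding R_def by (simp add: coeff_eq_0)
        next
          case False
          hence "l > degree Pa" "l > degree Pb" using l \<open>l \<noteq> 2*j\<close> dPa dPb by auto
          thus ?thesis using l2 unfolding R_def by (simp add: coeff_eq_0 mult_2)
        qed
      qed
    qed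
    show "orth j j R" unfolding orth_def
    proof (intro allI impI)
      fix A B assume A: "inV j A" and B: "inV j B"
      have "pr Pa A B = 0" using Ha A B inV_mono[OF A, of "Suc j"] unfolding orth_def by (auto simp: mult_2)
      moreover have "pr Pb A B = 0" using Hb A B inV_mono[OF B, of "Suc j"] unfolding orth_def by (auto simp: mult_2)
      moreover have "pr Pc A B = 0" using Hc A B unfolding orth_def by (auto simp: mult_2)
      ultimately show "pr R A B = 0" unfolding R_def by (simp add: pr_diff1 pr_smult1)
    qed
  qed
  hence rel: "Pa - Pb = Polynomial.smult t Pc" unfolding R_def by (simp add: mult_2)
  define A1 where "A1 = QA j (Suc j)"
  define B1 where "B1 = QB j (Suc j)"
  define A2 where "A2 = QA (Suc j) j"
  define B2 where "B2 = QB (Suc j) j"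
  have s1: "1 \<le> j + Suc j" and s2: "1 \<le> Suc j + j" by simp_all
  note P1 = Qprops[OF good_jS s1, folded A1_def B1_def] and P2 = Qprops[OF good_Sj s2, folded A2_def B2_def]
  have "pr Pa (A1 - A2) (B1 - B2) = coeff Pa (2*j+1) * mo (A1 - A2) (B1 - B2) (2*j+1)"
  proof (rule pr_top)
    show "degree Pa \<le> 2*j+1" using dPa by simp
    show "mo (A1 - A2) (B1 - B2) k = 0" if "k < 2*j+1" for k
      using D_moms[of k j] that unfolding A1_def A2_def B1_def B2_def by (cases "k = 2*j") auto
  qed
  hence e1: "pr Pa (A1 - A2) (B1 - B2) = cc j"
    using cPa unfolding cc_def A1_def A2_def B1_def B2_def by simp
  have e2: "pr Pa A2 B2 = 0" using Ha P2(1,2) unfolding orth_def by (auto simp: mult_2)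
  have e3: "pr Pb A1 B1 = 0" using Hb P1(1,2) unfolding orth_def by (auto simp: mult_2)
  have "pr Pc A1 B1 = coeff Pc (2*j) * mo A1 B1 (2*j)"
  proof (rule pr_top)
    show "degree Pc \<le> 2*j" using dPc by simp
    show "mo A1 B1 k = 0" if "k < 2*j" for k using P1(3)[of k] that by (simp add: mult_2)
  qed
  hence e4: "pr Pc A1 B1 = 1" using cPc P1(4) by (simp add: mult_2)
  have "pr (Pa - Pb) A1 B1 = cc j"
    using e1 e2 e3 unfolding pr_diff1 pr_diff2 by (simp add: mult_2)
  hence tc: "t = cc j" unfolding rel pr_smult1 e4 by (simp add: mult_2)
  have Pc0: "Pc \<noteq> 0" using Hc by (auto simp: mult_2)
  show ?thesis unfolding LA_a_def
  proof (rule the_equality)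
    show "LA_P (Suc j) (Suc j - 1) - LA_P (Suc j - 1) (Suc j) = Polynomial.smult (cc j) (LA_P (Suc j - 1) (Suc j - 1))"
      using rel tc unfolding Pa_def Pb_def Pc_def by (simp add: mult_2)
    fix a assume "LA_P (Suc j) (Suc j - 1) - LA_P (Suc j - 1) (Suc j) = Polynomial.smult a (LA_P (Suc j - 1) (Suc j - 1))"
    hence "Polynomial.smult a Pc = Polynomial.smult (cc j) Pc" using rel tc unfolding Pa_def Pb_def Pc_def by (simp add: mult_2)
    hence "Polynomial.smult (a - cc j) Pc = 0" by (simp add: smult_diff_left)
    thus "a = cc j" using Pc0 by (simp add: mult_2)
  qed
qed



lemma span_gen:
  fixes GA GB :: "nat \<Rightarrow> real poly" and p :: "nat \<Rightarrow> nat"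
  assumes ND: "\<And>A B. inV n A \<Longrightarrow> inV n B \<Longrightarrow> (\<forall>k<2*n. mo A B k = 0) \<Longrightarrow> A = 0 \<and> B = 0"
  shows "(\<And>j. s \<le> j \<Longrightarrow> j < s + M \<Longrightarrow> inV n (GA j) \<and> inV n (GB j) \<and> (\<forall>k<p j. mo (GA j) (GB j) k = 0)
            \<and> mo (GA j) (GB j) (p j) = 1 \<and> (\<forall>k. odd (k + p j) \<longrightarrow> mo (GA j) (GB j) k = 0)) \<Longrightarrow>
     (\<And>j. s \<le> j \<Longrightarrow> p (Suc j) = p j + 2) \<Longrightarrow>
     2*n \<le> p (s + M) \<Longrightarrow> inV n A \<Longrightarrow> inV n B \<Longrightarrow> (\<forall>k<p s. mo A B k = 0) \<Longrightarrow>
     (\<forall>k. odd (k + p s) \<longrightarrow> mo A B k = 0) \<Longrightarrow>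
     \<exists>c. A = (\<Sum>j\<in>{s..<s+M}. Polynomial.smult (c j) (GA j)) \<and> B = (\<Sum>j\<in>{s..<s+M}. Polynomial.smult (c j) (GB j))"
proof (induction M arbitrary: s A B)
  case 0
  have "A = 0 \<and> B = 0" using ND[OF "0.prems"(4,5)] "0.prems"(3,6) by auto
  thus ?case by simp
next
  case (Suc M)
  note G = Suc.prems(1) and ps = Suc.prems(2)
  have Gs: "inV n (GA s) \<and> inV n (GB s) \<and> (\<forall>k<p s. mo (GA s) (GB s) k = 0)
            \<and> mo (GA s) (GB s) (p s) = 1 \<and> (\<forall>k. odd (k + p s) \<longrightarrow> mo (GA s) (GB s) k = 0)"
    using G[of s] by simp
  define c0 where "c0 = mo A B (p s)"
  define A' where "A' = A - Polynomial.smult c0 (GA s)"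
  define B' where "B' = B - Polynomial.smult c0 (GB s)"
  have m: "mo A' B' k = mo A B k - c0 * mo (GA s) (GB s) k" for k
    unfolding A'_def B'_def mo_diff mo_smult ..
  have ps': "p (Suc s) = p s + 2" using ps[of s] by simp
  have "\<exists>c. A' = (\<Sum>j\<in>{Suc s..<Suc s+M}. Polynomial.smult (c j) (GA j)) \<and> B' = (\<Sum>j\<in>{Suc s..<Suc s+M}. Polynomial.smult (c j) (GB j))"
  proof (rule Suc.IH)
    show "inV n (GA j) \<and> inV n (GB j) \<and> (\<forall>k<p j. mo (GA j) (GB j) k = 0)
            \<and> mo (GA j) (GB j) (p j) = 1 \<and> (\<forall>k. odd (k + p j) \<longrightarrow> mo (GA j) (GB j) k = 0)"
      if "Suc s \<le> j" "j < Suc s + M" for j using G that by simp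
    show "p (Suc j) = p j + 2" if "Suc s \<le> j" for j using ps that by simp
    show "2*n \<le> p (Suc s + M)" using Suc.prems(3) by simp
    show "inV n A'" unfolding A'_def using Suc.prems(4) Gs by (intro inV_diff inV_smult) auto
    show "inV n B'" unfolding B'_def using Suc.prems(5) Gs by (intro inV_diff inV_smult) auto
    show "\<forall>k<p (Suc s). mo A' B' k = 0"
    proof (intro allI impI)
      fix k assume k: "k < p (Suc s)"
      show "mo A' B' k = 0"
      proof (cases "k < p s")
        case True thus ?thesis unfolding m using Suc.prems(6) Gs by simp
      next
        case False
        hence "k = p s \<or> k = p s + 1" using k ps' by auto
        thus ?thesis
        proof
          assume "k = p s" thus ?thesis unfolding m c0_def using Gs by simp
        next
          assume k1: "k = p s + 1"
          have "odd (k + p s)" using k1 by simp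
          thus ?thesis unfolding m using Suc.prems(7) Gs by simp
        qed
      qed
    qed
    show "\<forall>k. odd (k + p (Suc s)) \<longrightarrow> mo A' B' k = 0"
      unfolding ps' m using Suc.prems(7) Gs by simp
  qed
  then obtain c where c: "A' = (\<Sum>j\<in>{Suc s..<Suc s+M}. Polynomial.smult (c j) (GA j))"
      "B' = (\<Sum>j\<in>{Suc s..<Suc s+M}. Polynomial.smult (c j) (GB j))" by blast
  define c' where "c' = c(s := c0)"
  have iv: "{s..<s + Suc M} = insert s {Suc s..<Suc s+M}" by auto
  have e1: "(\<Sum>j\<in>{Suc s..<Suc s+M}. Polynomial.smult (c' j) (GA j)) = (\<Sum>j\<in>{Suc s..<Suc s+M}. Polynomial.smult (c j) (GA j))"
    by (intro sum.cong refl) (auto simp: c'_def)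
  have e2: "(\<Sum>j\<in>{Suc s..<Suc s+M}. Polynomial.smult (c' j) (GB j)) = (\<Sum>j\<in>{Suc s..<Suc s+M}. Polynomial.smult (c j) (GB j))"
    by (intro sum.cong refl) (auto simp: c'_def)
  show ?case
  proof (intro exI[of _ c'] conjI)
    show "A = (\<Sum>j\<in>{s..<s + Suc M}. Polynomial.smult (c' j) (GA j))"
      unfolding iv using c(1) e1 by (simp add: A'_def c'_def)
    show "B = (\<Sum>j\<in>{s..<s + Suc M}. Polynomial.smult (c' j) (GB j))"
      unfolding iv using c(2) e2 by (simp add: B'_def c'_def)
  qed
qed


lemma odd_sum_eq:
  fixes a c G H :: "nat \<Rightarrow> real"
  assumes n: "1 \<le> n"
  shows "(1/2) * (\<Sum>j = Suc s..n. a j * c (j - 1) * G j) + (\<Sum>j = s..n - 1. c j * H j)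
       = (\<Sum>j\<in>{s..<n}. c j * (H j + a (Suc j) / 2 * G (Suc j)))"
proof -
  have e1: "{Suc s..n} = {Suc s..Suc (n - 1)}" using n by simp
  have e2: "{s..n - 1} = {s..<n}" using n by auto
  have "(\<Sum>j = Suc s..n. a j * c (j - 1) * G j) = (\<Sum>j = s..n - 1. a (Suc j) * c j * G (Suc j))"
    unfolding e1 sum.shift_bounds_cl_Suc_ivl by simp
  hence "(1/2) * (\<Sum>j = Suc s..n. a j * c (j - 1) * G j) = (\<Sum>j\<in>{s..<n}. c j * (a (Suc j) / 2 * G (Suc j)))"
    unfolding e2 by (simp add: sum_distrib_left mult_ac)
  moreover have "(\<Sum>j = s..n - 1. c j * H j) = (\<Sum>j\<in>{s..<n}. c j * H j)" unfolding e2 ..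
  ultimately show ?thesis by (simp add: distrib_left sum.distrib)
qed

lemma AE_three: "AE x in lborel. x \<noteq> -1 \<and> x \<noteq> 0 \<and> x \<noteq> (1::real)"
  using AE_lborel_singleton[of "-1::real"] AE_lborel_singleton[of "0::real"] AE_lborel_singleton[of "1::real"]
  by eventually_elim auto

lemma split_cases: "x \<in> {-1..1} \<Longrightarrow> x \<noteq> -1 \<and> x \<noteq> 0 \<and> x \<noteq> (1::real) \<Longrightarrow> x \<in> {-1<..<0} \<or> x \<in> {0<..<1}"
  by auto

theorem proposition2:
  fixes n k :: nat and f :: "nat \<Rightarrow> real \<Rightarrow> real"
  assumes "alpert_multiwavelets n f" and "1 \<le> k" and "k \<le> n"
  shows "\<exists>c d :: nat \<Rightarrow> real. AE x in lborel. x \<in> {-1..1} \<longrightarrow>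
    f k x = (if even (k + n)
             then (\<Sum>j = (k + n) div 2..n. c j * LA_Q j j x)
             else (1/2) * (\<Sum>j = (k + n + 1) div 2..n. LA_a j * d (j - 1) * LA_Q j j x)
                  + (\<Sum>j = (k + n - 1) div 2..n - 1. d j * LA_Q (j + 1) j x))"
proof -
  have kI: "k \<in> {1..n}" using assms(2,3) by simp
  have n1: "1 \<le> n" using assms(2,3) by simp
  note af = assms(1)[unfolded alpert_multiwavelets_def]
  obtain p0 :: "real poly" where p0: "degree p0 \<le> n - 1" "\<And>t. t \<in> {0<..<1} \<Longrightarrow> f k t = poly p0 t"
    using af kI by blast
  have sym: "\<And>t. t \<in> {0<..<1} \<Longrightarrow> f k (-t) = (-1) ^ (k + n - 1) * f k t" using af kI by blast
  have mom0: "\<And>i. i \<le> k + n - 2 \<Longrightarrow> (LBINT t=-1..1. f k t * t ^ i) = 0" using af kI by blast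
  define \<epsilon> :: real where "\<epsilon> = (-1) ^ (k + n - 1)"
  define Af where "Af = Polynomial.smult \<epsilon> (rf p0)"
  have ee: "\<epsilon> * \<epsilon> = 1" unfolding \<epsilon>_def by (simp add: power_mult_distrib[symmetric])
  have inVp: "inV n p0" unfolding inV_iff using n1 p0(1) by simp
  have inVA: "inV n Af" unfolding Af_def by (intro inV_smult) (simp add: inV_rf inVp)
  have fneg: "f k t = poly Af t" if t: "t \<in> {-1<..<0}" for t
  proof -
    have "- t \<in> {0<..<1}" using t by auto
    from sym[OF this] have "f k t = \<epsilon> * f k (- t)" unfolding \<epsilon>_def by simp
    also have "\<dots> = \<epsilon> * poly p0 (- t)" using p0(2)[OF \<open>- t \<in> {0<..<1}\<close>] by simp
    also have "\<dots> = poly Af t" unfolding Af_def by (simp add: poly_rf)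
    finally show ?thesis .
  qed
  have momf: "mo Af p0 i = 0" if i: "i \<le> k + n - 2" for i
  proof -
    have "(LBINT t=-1..1. f k t * t ^ i) = Jab (-1) 0 (monom 1 i * Af) + Jab 0 1 (monom 1 i * p0)"
      by (rule INT_split) (auto simp: fneg p0(2) poly_monom mult.commute)
    thus ?thesis using mom0[OF i] unfolding mo_def pr_def by simp
  qed
  have par: "\<epsilon> * mo Af p0 i = (-1)^i * mo Af p0 i" for i
  proof (rule mo_parity[OF inVA inVp])
    show "rf p0 = Polynomial.smult \<epsilon> Af" unfolding Af_def using ee by simp
    show "rf Af = Polynomial.smult \<epsilon> p0" unfolding Af_def by (simp add: rf_smult)
  qed
  have NDn: "A = 0 \<and> B = 0" if "inV n A" "inV n B" "\<forall>k<2*n. mo A B k = 0" for A B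
    by (rule ND_poly) (use that in \<open>auto simp: mult_2\<close>)
  show ?thesis
  proof (cases "even (k + n)")
    case True
    define s where "s = (k + n) div 2"
    have s2: "2 * s = k + n" unfolding s_def using True by simp
    have s1: "1 \<le> s" "s \<le> n" using s2 assms(2,3) by auto
    have eps: "\<epsilon> = -1"
    proof -
      have "odd (k + n - 1)" using True assms(2) by simp
      thus ?thesis unfolding \<epsilon>_def by simp
    qed
    have "\<exists>c. Af = (\<Sum>j\<in>{s..<s+(n+1-s)}. Polynomial.smult (c j) (QA j j)) \<and>
             p0 = (\<Sum>j\<in>{s..<s+(n+1-s)}. Polynomial.smult (c j) (QB j j))"
    proof (rule span_gen[OF NDn, where p="\<lambda>j. 2*j - 1"])
      fix j assume j: "s \<le> j" "j < s + (n + 1 - s)"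
      hence j1: "1 \<le> j" "j \<le> n" "1 \<le> j + j" using s1 by auto
      note P = Qprops[OF good_jj j1(3)]
      show "inV n (QA j j) \<and> inV n (QB j j) \<and> (\<forall>k<2*j - 1. mo (QA j j) (QB j j) k = 0)
            \<and> mo (QA j j) (QB j j) (2*j - 1) = 1 \<and> (\<forall>k'. odd (k' + (2*j - 1)) \<longrightarrow> mo (QA j j) (QB j j) k' = 0)"
      proof (intro conjI allI impI)
        show "inV n (QA j j)" using P(1) j1 inV_mono by blast
        show "inV n (QB j j)" using P(2) j1 inV_mono by blast
        show "mo (QA j j) (QB j j) k' = 0" if "k' < 2*j - 1" for k' using P(3)[of k'] that by simp
        show "mo (QA j j) (QB j j) (2*j - 1) = 1" using P(4) by (simp add: mult_2)
        show "mo (QA j j) (QB j j) k' = 0" if "odd (k' + (2*j - 1))" for k'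
        proof -
          have "even k'" using that j1 by (simp add: mult_2)
          thus ?thesis by (rule Qjj_even_mom[OF j1(1)])
        qed
      qed
    next
      fix j assume "s \<le> j" thus "2 * Suc j - 1 = 2 * j - 1 + 2" using s1 by simp
    next
      show "2 * n \<le> 2 * (s + (n + 1 - s)) - 1" using s1 by simp
    next
      show "inV n Af" by (rule inVA)
      show "inV n p0" by (rule inVp)
      show "\<forall>k'<2 * s - 1. mo Af p0 k' = 0" using momf s2 by auto
      show "\<forall>k'. odd (k' + (2 * s - 1)) \<longrightarrow> mo Af p0 k' = 0"
      proof (intro allI impI)
        fix k' assume "odd (k' + (2 * s - 1))"
        hence "even k'" using s1 by (simp add: mult_2)
        thus "mo Af p0 k' = 0" using par[of k'] eps by simp
      qed
    qed
    then obtain c where cA: "Af = (\<Sum>j\<in>{s..<s+(n+1-s)}. Polynomial.smult (c j) (QA j j))"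
       and cB: "p0 = (\<Sum>j\<in>{s..<s+(n+1-s)}. Polynomial.smult (c j) (QB j j))" by blast
    have iv: "{s..<s+(n+1-s)} = {s..n}" using s1 by auto
    have pt: "f k x = (\<Sum>j = s..n. c j * LA_Q j j x)" if "x \<in> {-1<..<0} \<or> x \<in> {0<..<1}" for x
      using that
    proof
      assume x: "x \<in> {-1<..<0}"
      have "f k x = poly Af x" by (rule fneg[OF x])
      also have "\<dots> = (\<Sum>j = s..n. c j * poly (QA j j) x)" unfolding cA iv poly_sum by simp
      also have "\<dots> = (\<Sum>j = s..n. c j * LA_Q j j x)" using x by (simp add: LA_Q_neg QA_def)
      finally show ?thesis .
    next
      assume x: "x \<in> {0<..<1}"
      have "f k x = poly p0 x" by (rule p0(2)[OF x])
      also have "\<dots> = (\<Sum>j = s..n. c j * poly (QB j j) x)" unfolding cB iv poly_sum by simp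
      also have "\<dots> = (\<Sum>j = s..n. c j * LA_Q j j x)" using x by (simp add: LA_Q_pos QB_def)
      finally show ?thesis .
    qed
    show ?thesis
    proof (intro exI)
      show "AE x in lborel. x \<in> {-1..1} \<longrightarrow>
        f k x = (if even (k + n)
             then (\<Sum>j = (k + n) div 2..n. c j * LA_Q j j x)
             else (1/2) * (\<Sum>j = (k + n + 1) div 2..n. LA_a j * c (j - 1) * LA_Q j j x)
                  + (\<Sum>j = (k + n - 1) div 2..n - 1. c j * LA_Q (j + 1) j x))"
        using AE_three
      proof eventually_elim
        case (elim x)
        show ?case
        proof
          assume "x \<in> {-1..1}"
          hence "x \<in> {-1<..<0} \<or> x \<in> {0<..<1}" using elim by (rule split_cases)
          thus "f k x = (if even (k + n)
             then (\<Sum>j = (k + n) div 2..n. c j * LA_Q j j x)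
             else (1/2) * (\<Sum>j = (k + n + 1) div 2..n. LA_a j * c (j - 1) * LA_Q j j x)
                  + (\<Sum>j = (k + n - 1) div 2..n - 1. c j * LA_Q (j + 1) j x))"
            using pt True unfolding s_def by simp
        qed
      qed
    qed
  next
    case False
    define s where "s = (k + n - 1) div 2"
    have s2: "2 * s = k + n - 1" unfolding s_def using False by simp
    have s1: "1 \<le> s" "s < n" using s2 assms(2,3) False by auto
    have eps: "\<epsilon> = 1"
    proof -
      have "even (k + n - 1)" using False assms(2) by simp
      thus ?thesis unfolding \<epsilon>_def by simp
    qed
    define GA where "GA j = QA (Suc j) j + Polynomial.smult (LA_a (Suc j) / 2) (QA (Suc j) (Suc j))" for j
    define GB where "GB j = QB (Suc j) j + Polynomial.smult (LA_a (Suc j) / 2) (QB (Suc j) (Suc j))" for j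
    have moG: "mo (GA j) (GB j) k' = mo (QA (Suc j) j) (QB (Suc j) j) k'
         + LA_a (Suc j) / 2 * mo (QA (Suc j) (Suc j)) (QB (Suc j) (Suc j)) k'" for j k'
      unfolding GA_def GB_def mo_add mo_smult ..
    have "\<exists>c. Af = (\<Sum>j\<in>{s..<s+(n-s)}. Polynomial.smult (c j) (GA j)) \<and>
             p0 = (\<Sum>j\<in>{s..<s+(n-s)}. Polynomial.smult (c j) (GB j))"
    proof (rule span_gen[OF NDn, where p="\<lambda>j. 2*j"])
      fix j assume j: "s \<le> j" "j < s + (n - s)"
      hence j1: "Suc j \<le> n" "1 \<le> Suc j + j" "1 \<le> Suc j + Suc j" using s1 by auto
      note P21 = Qprops[OF good_Sj j1(2)] and P22 = Qprops[OF good_jj j1(3)]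
      have odd0: "mo (GA j) (GB j) k' = 0" if "odd k'" for k'
      proof -
        have A': "inV (Suc j) (QA (Suc j) j)" and B': "inV (Suc j) (QB (Suc j) j)"
          using P21(1) P21(2) inV_mono by auto
        have r: "mo (QA j (Suc j)) (QB j (Suc j)) k' = - mo (QA (Suc j) j) (QB (Suc j) j) k'"
          unfolding Q_reflect mo_rf[OF A' B'] using that by simp
        have "cc j * mo (QA (Suc j) (Suc j)) (QB (Suc j) (Suc j)) k'
              = mo (QA j (Suc j) - QA (Suc j) j) (QB j (Suc j) - QB (Suc j) j) k'"
          unfolding D_rel mo_smult ..
        also have "\<dots> = - 2 * mo (QA (Suc j) j) (QB (Suc j) j) k'" unfolding mo_diff r by simp
        finally show ?thesis unfolding moG LA_a_eq by simp
      qed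
      show "inV n (GA j) \<and> inV n (GB j) \<and> (\<forall>k<2*j. mo (GA j) (GB j) k = 0)
            \<and> mo (GA j) (GB j) (2*j) = 1 \<and> (\<forall>k'. odd (k' + 2*j) \<longrightarrow> mo (GA j) (GB j) k' = 0)"
      proof (intro conjI allI impI)
        show "inV n (GA j)" unfolding GA_def using P21(1) P22(1) j1
          by (intro inV_add inV_smult) (auto intro: inV_mono)
        show "inV n (GB j)" unfolding GB_def using P21(2) P22(2) j1
          by (intro inV_add inV_smult) (auto intro: inV_mono)
        show "mo (GA j) (GB j) k' = 0" if "k' < 2*j" for k'
          unfolding moG using P21(3)[of k'] P22(3)[of k'] that by simp
        show "mo (GA j) (GB j) (2*j) = 1"
          unfolding moG using P21(4) P22(3)[of "2*j"] by (simp add: mult_2)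
        show "mo (GA j) (GB j) k' = 0" if "odd (k' + 2*j)" for k'
          using that by (intro odd0) simp
      qed
    next
      fix j assume "s \<le> j" thus "2 * Suc j = 2 * j + 2" by simp
    next
      show "2 * n \<le> 2 * (s + (n - s))" using s1 by simp
    next
      show "inV n Af" by (rule inVA)
      show "inV n p0" by (rule inVp)
      show "\<forall>k'<2 * s. mo Af p0 k' = 0" using momf s2 by auto
      show "\<forall>k'. odd (k' + 2 * s) \<longrightarrow> mo Af p0 k' = 0"
      proof (intro allI impI)
        fix k' assume "odd (k' + 2 * s)"
        hence "odd k'" by simp
        thus "mo Af p0 k' = 0" using par[of k'] eps by simp
      qed
    qed
    then obtain c where cA: "Af = (\<Sum>j\<in>{s..<s+(n-s)}. Polynomial.smult (c j) (GA j))"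
       and cB: "p0 = (\<Sum>j\<in>{s..<s+(n-s)}. Polynomial.smult (c j) (GB j))" by blast
    have iv: "{s..<s+(n-s)} = {s..<n}" using s1 by auto
    have sdiv: "(k + n + 1) div 2 = Suc s" "(k + n - 1) div 2 = s" using s2 False by auto
    have tgt: "(1/2) * (\<Sum>j = (k + n + 1) div 2..n. LA_a j * c (j - 1) * LA_Q j j x)
                  + (\<Sum>j = (k + n - 1) div 2..n - 1. c j * LA_Q (j + 1) j x)
             = (\<Sum>j\<in>{s..<n}. c j * (LA_Q (Suc j) j x + LA_a (Suc j) / 2 * LA_Q (Suc j) (Suc j) x))" for x
      unfolding sdiv using odd_sum_eq[OF n1, of LA_a c "\<lambda>j. LA_Q j j x" s "\<lambda>j. LA_Q (Suc j) j x"] by simp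
    have pt: "f k x = (\<Sum>j\<in>{s..<n}. c j * (LA_Q (Suc j) j x + LA_a (Suc j) / 2 * LA_Q (Suc j) (Suc j) x))"
      if "x \<in> {-1<..<0} \<or> x \<in> {0<..<1}" for x
      using that
    proof
      assume x: "x \<in> {-1<..<0}"
      have "f k x = poly Af x" by (rule fneg[OF x])
      also have "\<dots> = (\<Sum>j\<in>{s..<n}. c j * poly (GA j) x)" unfolding cA iv poly_sum by simp
      also have "\<dots> = (\<Sum>j\<in>{s..<n}. c j * (LA_Q (Suc j) j x + LA_a (Suc j) / 2 * LA_Q (Suc j) (Suc j) x))"
        using x by (simp add: LA_Q_neg QA_def GA_def)
      finally show ?thesis .
    next
      assume x: "x \<in> {0<..<1}"
      have "f k x = poly p0 x" by (rule p0(2)[OF x])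
      also have "\<dots> = (\<Sum>j\<in>{s..<n}. c j * poly (GB j) x)" unfolding cB iv poly_sum by simp
      also have "\<dots> = (\<Sum>j\<in>{s..<n}. c j * (LA_Q (Suc j) j x + LA_a (Suc j) / 2 * LA_Q (Suc j) (Suc j) x))"
        using x by (simp add: LA_Q_pos QB_def GB_def)
      finally show ?thesis .
    qed
    show ?thesis
    proof (intro exI)
      show "AE x in lborel. x \<in> {-1..1} \<longrightarrow>
        f k x = (if even (k + n)
             then (\<Sum>j = (k + n) div 2..n. c j * LA_Q j j x)
             else (1/2) * (\<Sum>j = (k + n + 1) div 2..n. LA_a j * c (j - 1) * LA_Q j j x)
                  + (\<Sum>j = (k + n - 1) div 2..n - 1. c j * LA_Q (j + 1) j x))"
        using AE_three
      proof eventually_elim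
        case (elim x)
        show ?case
        proof
          assume "x \<in> {-1..1}"
          hence "x \<in> {-1<..<0} \<or> x \<in> {0<..<1}" using elim by (rule split_cases)
          hence "f k x = (1/2) * (\<Sum>j = (k + n + 1) div 2..n. LA_a j * c (j - 1) * LA_Q j j x)
                  + (\<Sum>j = (k + n - 1) div 2..n - 1. c j * LA_Q (j + 1) j x)"
            using pt tgt by simp
          thus "f k x = (if even (k + n)
             then (\<Sum>j = (k + n) div 2..n. c j * LA_Q j j x)
             else (1/2) * (\<Sum>j = (k + n + 1) div 2..n. LA_a j * c (j - 1) * LA_Q j j x)
                  + (\<Sum>j = (k + n - 1) div 2..n - 1. c j * LA_Q (j + 1) j x))"
            using False by simp
        qed
      qed
    qed
  qed
qed


end
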